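(* Let $M_1, M_2, N_1, N_2$ be nontrivial permutation groups. Suppose $M_1$ has property (FA), and no nontrivial quotient of $M_1$ is isomorphic to any subgroup of $M_2$ or $N_2$. Then $M_1 \boxtimes N_1$ and $M_2 \boxtimes N_2$ are not (abstractly) isomorphic.
   Context: Box product: let $\Omega$ and $\Delta$ be disjoint sets, each of cardinality at least two, and let $M \leq \mathrm{Sym}(\Omega)$ and $N \leq \mathrm{Sym}(\Delta)$ be nontrivial permutation groups. Let $T$ be the $(|\Omega|,|\Delta|)$-biregular tree, with $V_\Omega$ the part of its bipartition consisting of vertices of valency $|\Omega|$ and $V_\Delta$ the part consisting of vertices of valency $|\Delta|$. For a vertex $v$, $A(v)$ denotes the set of arcs with origin $v$ and $\overline{A}(v)$ the set of arcs with terminus $v$. A legal colouring is a map $c : AT \to \Omega \cup \Delta$ such that $c|_{A(v)} : A(v) \to \Omega$ is a bijection for every $v \in V_\Omega$, $c|_{A(v)} : A(v) \to \Delta$ is a bijection for every $v \in V_\Delta$, and $c|_{\overline{A}(v)}$ has image of cardinality one for every vertex $v$. Define $U(M,N) = \{ g \in (\mathrm{Aut}\, T)_{\{V_\Omega\}} : c|_{A(gv)}\, g|_{A(v)}\, c|_{A(v)}^{-1} \in M \text{ for all } v \in V_\Omega,\ \in N \text{ for all } v \in V_\Delta\}$. The box product $M \boxtimes N$ is the subgroup of $\mathrm{Sym}(V_\Delta)$ induced by $U(M,N)$; up to permutation isomorphism it does not depend on the choice of legal colouring $c$. A group $G$ has Serre's property (FA) if, whenever $G$ acts on a tree without inversion,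 some vertex of the tree is fixed by all elements of $G$. *)

theory Defs
  imports "HOL-Algebra.Algebra"
begin

definition perm_group :: "'c set \<Rightarrow> ('c \<Rightarrow> 'c) set \<Rightarrow> bool" where
  "perm_group \<Omega> M \<longleftrightarrow> subgroup M (BijGroup \<Omega>)"

definition pgrp :: "'c set \<Rightarrow> ('c \<Rightarrow> 'c) set \<Rightarrow> ('c \<Rightarrow> 'c) monoid" where
  "pgrp \<Omega> M = (BijGroup \<Omega>)\<lparr>carrier := M\<rparr>"

definition nontrivial_perm_group :: "'c set \<Rightarrow> ('c \<Rightarrow> 'c) set \<Rightarrow> bool" where
  "nontrivial_perm_group \<Omega> M \<longleftrightarrow> perm_group \<Omega> M \<and> M \<noteq> {\<one>\<^bsub>BijGroup \<Omega>\<^esub>}"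

definition walk :: "('v \<Rightarrow> 'v \<Rightarrow> bool) \<Rightarrow> 'v list \<Rightarrow> bool" where
  "walk E xs \<longleftrightarrow> xs \<noteq> [] \<and> (\<forall>i. Suc i < length xs \<longrightarrow> E (xs ! i) (xs ! Suc i))"

definition reduced :: "'v list \<Rightarrow> bool" where
  "reduced xs \<longleftrightarrow> (\<forall>i. i + 2 < length xs \<longrightarrow> xs ! i \<noteq> xs ! (i + 2))"

definition is_tree :: "'v set \<Rightarrow> ('v \<Rightarrow> 'v \<Rightarrow> bool) \<Rightarrow> bool" where
  "is_tree V E \<longleftrightarrow> V \<noteq> {}
     \<and> (\<forall>u v. E u v \<longrightarrow> u \<in> V \<and> v \<in> V)
     \<and> (\<forall>u v. E u v \<longrightarrow> E v u)
     \<and> (\<forall>v. \<not> E v v)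
     \<and> (\<forall>u\<in>V. \<forall>v\<in>V. \<exists>!xs. walk E xs \<and> reduced xs \<and> hd xs = u \<and> last xs = v)"

definition tree_action :: "('g, 'b) monoid_scheme \<Rightarrow> 'v set \<Rightarrow> ('v \<Rightarrow> 'v \<Rightarrow> bool) \<Rightarrow> ('g \<Rightarrow> 'v \<Rightarrow> 'v) \<Rightarrow> bool" where
  "tree_action G V E \<phi> \<longleftrightarrow> \<phi> \<in> hom G (BijGroup V)
     \<and> (\<forall>g\<in>carrier G. \<forall>u v. E u v \<longrightarrow> E (\<phi> g u) (\<phi> g v))"

definition without_inversion :: "('g, 'b) monoid_scheme \<Rightarrow> ('v \<Rightarrow> 'v \<Rightarrow> bool) \<Rightarrow> ('g \<Rightarrow> 'v \<Rightarrow> 'v) \<Rightarrow> bool" where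
  "without_inversion G E \<phi> \<longleftrightarrow> (\<forall>g\<in>carrier G. \<forall>u v. E u v \<longrightarrow> \<not> (\<phi> g u = v \<and> \<phi> g v = u))"

text \<open>Property (FA).  Trees are taken with vertices in the type 'g \<times> nat, which is no
  restriction: the subtree spanned by one orbit is invariant and has at most
  max(|G|, aleph_0) vertices.\<close>
definition property_FA :: "('g, 'b) monoid_scheme \<Rightarrow> bool" where
  "property_FA G \<longleftrightarrow> (\<forall>(V :: ('g \<times> nat) set) E \<phi>.
      is_tree V E \<and> tree_action G V E \<phi> \<and> without_inversion G E \<phi>
      \<longrightarrow> (\<exists>v\<in>V. \<forall>g\<in>carrier G. \<phi> g v = v))"

definition arcs_out :: "('v \<Rightarrow> 'v \<Rightarrow> bool) \<Rightarrow> 'v \<Rightarrow> ('v \<times> 'v) set" where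
  "arcs_out E v = {(v, u) | u. E v u}"

definition arcs_in :: "('v \<Rightarrow> 'v \<Rightarrow> bool) \<Rightarrow> 'v \<Rightarrow> ('v \<times> 'v) set" where
  "arcs_in E v = {(u, v) | u. E u v}"

text \<open>(V,E) is a tree with bipartition VO (vertices of valency |Omega|) and VD
  (valency |Delta|), and c is a legal colouring.  (The valencies are forced by the
  bijectivity conditions of the legal colouring.)\<close>
definition legal_coloured_biregular_tree ::
  "'c set \<Rightarrow> 'c set \<Rightarrow> 'v set \<Rightarrow> ('v \<Rightarrow> 'v \<Rightarrow> bool) \<Rightarrow> 'v set \<Rightarrow> 'v set \<Rightarrow> ('v \<times> 'v \<Rightarrow> 'c) \<Rightarrow> bool" where
  "legal_coloured_biregular_tree \<Omega> \<Delta> V E VO VD c \<longleftrightarrow>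
     is_tree V E \<and> VO \<union> VD = V \<and> VO \<inter> VD = {}
     \<and> (\<forall>u v. E u v \<longrightarrow> (u \<in> VO \<and> v \<in> VD) \<or> (u \<in> VD \<and> v \<in> VO))
     \<and> (\<forall>v\<in>VO. bij_betw c (arcs_out E v) \<Omega>)
     \<and> (\<forall>v\<in>VD. bij_betw c (arcs_out E v) \<Delta>)
     \<and> (\<forall>v\<in>V. card (c ` arcs_in E v) = 1)"

text \<open>Local action of g at v: c|A(gv) o g|A(v) o (c|A(v))^-1, as an (extensional)
  permutation of the colour set S.\<close>
definition local_action ::
  "'c set \<Rightarrow> ('v \<Rightarrow> 'v \<Rightarrow> bool) \<Rightarrow> ('v \<times> 'v \<Rightarrow> 'c) \<Rightarrow> ('v \<Rightarrow> 'v) \<Rightarrow> 'v \<Rightarrow> 'c \<Rightarrow> 'c" where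
  "local_action S E c g v = (\<lambda>a\<in>S. c (g v, g (THE u. E v u \<and> c (v, u) = a)))"

definition tree_aut :: "'v set \<Rightarrow> ('v \<Rightarrow> 'v \<Rightarrow> bool) \<Rightarrow> ('v \<Rightarrow> 'v) set" where
  "tree_aut V E = {g. bij_betw g V V \<and> (\<forall>u\<in>V. \<forall>v\<in>V. E u v \<longleftrightarrow> E (g u) (g v))}"

definition U_group ::
  "'c set \<Rightarrow> 'c set \<Rightarrow> ('c \<Rightarrow> 'c) set \<Rightarrow> ('c \<Rightarrow> 'c) set \<Rightarrow> 'v set \<Rightarrow> ('v \<Rightarrow> 'v \<Rightarrow> bool)
    \<Rightarrow> 'v set \<Rightarrow> 'v set \<Rightarrow> ('v \<times> 'v \<Rightarrow> 'c) \<Rightarrow> ('v \<Rightarrow> 'v) set" where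
  "U_group \<Omega> \<Delta> M N V E VO VD c =
     {g \<in> tree_aut V E. g ` VO = VO
        \<and> (\<forall>v\<in>VO. local_action \<Omega> E c g v \<in> M)
        \<and> (\<forall>v\<in>VD. local_action \<Delta> E c g v \<in> N)}"

definition box_product_set ::
  "'c set \<Rightarrow> 'c set \<Rightarrow> ('c \<Rightarrow> 'c) set \<Rightarrow> ('c \<Rightarrow> 'c) set \<Rightarrow> 'v set \<Rightarrow> ('v \<Rightarrow> 'v \<Rightarrow> bool)
    \<Rightarrow> 'v set \<Rightarrow> 'v set \<Rightarrow> ('v \<times> 'v \<Rightarrow> 'c) \<Rightarrow> ('v \<Rightarrow> 'v) set" where
  "box_product_set \<Omega> \<Delta> M N V E VO VD c = (\<lambda>g. restrict g VD) ` U_group \<Omega> \<Delta> M N V E VO VD c"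

definition box_product ::
  "'c set \<Rightarrow> 'c set \<Rightarrow> ('c \<Rightarrow> 'c) set \<Rightarrow> ('c \<Rightarrow> 'c) set \<Rightarrow> 'v set \<Rightarrow> ('v \<Rightarrow> 'v \<Rightarrow> bool)
    \<Rightarrow> 'v set \<Rightarrow> 'v set \<Rightarrow> ('v \<times> 'v \<Rightarrow> 'c) \<Rightarrow> ('v \<Rightarrow> 'v) monoid" where
  "box_product \<Omega> \<Delta> M N V E VO VD c = (BijGroup VD)\<lparr>carrier := box_product_set \<Omega> \<Delta> M N V E VO VD c\<rparr>"

definition box_data :: "'c set \<Rightarrow> 'c set \<Rightarrow> ('c \<Rightarrow> 'c) set \<Rightarrow> ('c \<Rightarrow> 'c) set \<Rightarrow> bool" where
  "box_data \<Omega> \<Delta> M N \<longleftrightarrow> \<Omega> \<inter> \<Delta> = {}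
     \<and> (\<exists>a\<in>\<Omega>. \<exists>b\<in>\<Omega>. a \<noteq> b) \<and> (\<exists>a\<in>\<Delta>. \<exists>b\<in>\<Delta>. a \<noteq> b)
     \<and> nontrivial_perm_group \<Omega> M \<and> nontrivial_perm_group \<Delta> N"

end

theory Submission
  imports Defs
begin


lemma walk_Nil[simp]: "\<not> walk E []" by (simp add: walk_def)
lemma walk_single[simp]: "walk E [x]" by (simp add: walk_def)
lemma walk_Cons2[simp]: "walk E (x#y#xs) \<longleftrightarrow> E x y \<and> walk E (y#xs)"
proof
  assume "walk E (x#y#xs)"
  then show "E x y \<and> walk E (y#xs)"
    unfolding walk_def by (auto; metis Suc_less_eq length_Cons nth_Cons_Suc)
next
  assume a: "E x y \<and> walk E (y#xs)"
  show "walk E (x#y#xs)" unfolding walk_def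
  proof (intro conjI allI impI)
    fix i assume "Suc i < length (x#y#xs)"
    then show "E ((x#y#xs) ! i) ((x#y#xs) ! Suc i)"
      using a unfolding walk_def by (cases i) auto
  qed simp
qed

lemma reduced_short: "length xs \<le> 2 \<Longrightarrow> reduced xs" by (simp add: reduced_def)
lemma reduced_Nil[simp]: "reduced []" and reduced_1[simp]: "reduced [x]" and reduced_2[simp]: "reduced [x,y]"
  by (simp_all add: reduced_def)
lemma reduced_Cons3[simp]: "reduced (x#y#z#xs) \<longleftrightarrow> x \<noteq> z \<and> reduced (y#z#xs)"
proof
  assume a: "reduced (x#y#z#xs)"
  have "x \<noteq> z" using a[unfolded reduced_def, rule_format, of 0] by simp
  moreover have "reduced (y#z#xs)" unfolding reduced_def
  proof (intro allI impI)
    fix i assume "i + 2 < length (y#z#xs)"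
    then show "(y#z#xs) ! i \<noteq> (y#z#xs) ! (i+2)"
      using a[unfolded reduced_def, rule_format, of "Suc i"] by simp
  qed
  ultimately show "x \<noteq> z \<and> reduced (y#z#xs)" by simp
next
  assume a: "x \<noteq> z \<and> reduced (y#z#xs)"
  show "reduced (x#y#z#xs)" unfolding reduced_def
  proof (intro allI impI)
    fix i assume i: "i + 2 < length (x#y#z#xs)"
    show "(x#y#z#xs) ! i \<noteq> (x#y#z#xs) ! (i+2)"
    proof (cases i)
      case 0 then show ?thesis using a by simp
    next
      case (Suc j) then show ?thesis using a i unfolding reduced_def
        by (metis Suc_eq_plus1 add.commute add_2_eq_Suc' add_less_cancel_left length_Cons nth_Cons_Suc)
    qed
  qed
qed

lemma reduced_Cons_tl: "reduced (x#xs) \<Longrightarrow> reduced xs"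
  by (cases xs rule: remdups_adj.cases) auto

lemma walk_Cons_tl: "walk E (x#xs) \<Longrightarrow> xs \<noteq> [] \<Longrightarrow> walk E xs"
  by (cases xs) auto

lemma walk_append_single:
  "xs \<noteq> [] \<Longrightarrow> walk E (xs @ [y]) \<longleftrightarrow> walk E xs \<and> E (last xs) y"
proof (induction xs rule: induct_list012)
  case (3 x z zs) then show ?case by auto
qed auto

lemma reduced_append_single:
  "reduced (xs @ [y]) \<longleftrightarrow> reduced xs \<and> (2 \<le> length xs \<longrightarrow> xs ! (length xs - 2) \<noteq> y)"
proof (induction xs rule: induct_list012)
  case (3 x z zs)
  show ?case
  proof (cases zs)
    case Nil then show ?thesis by simp
  next
    case (Cons w ws)
    have "reduced ((x#z#zs) @ [y]) = (x \<noteq> w \<and> reduced ((z#zs) @ [y]))" using Cons by simp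
    also have "\<dots> = (x \<noteq> w \<and> reduced (z#zs) \<and> (z#zs) ! (length (z#zs) - 2) \<noteq> y)"
      using 3 Cons by simp
    also have "\<dots> = (reduced (x#z#zs) \<and> (x#z#zs) ! (length (x#z#zs) - 2) \<noteq> y)"
      using Cons by auto
    finally show ?thesis by simp
  qed
qed auto

lemma walk_append: "walk E xs \<Longrightarrow> walk E ys \<Longrightarrow> E (last xs) (hd ys) \<Longrightarrow> walk E (xs @ ys)"
proof (induction xs rule: induct_list012)
  case (2 x) then show ?case by (cases ys) auto
next
  case (3 x z zs) then show ?case by auto
qed auto

lemma walk_join: "walk E xs \<Longrightarrow> walk E ys \<Longrightarrow> last xs = hd ys \<Longrightarrow> walk E (xs @ tl ys)"
proof (cases ys)
  case (Cons y ys')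
  assume a: "walk E xs" "walk E ys" "last xs = hd ys"
  show ?thesis
  proof (cases ys')
    case Nil then show ?thesis using a Cons by simp
  next
    case (Cons y2 ys2)
    then show ?thesis using a \<open>ys = y # ys'\<close> by (intro walk_append) auto
  qed
qed simp

lemma walk_rev: "(\<And>u v. E u v \<Longrightarrow> E v u) \<Longrightarrow> walk E xs \<Longrightarrow> walk E (rev xs)"
proof (induction xs rule: induct_list012)
  case (3 x z zs)
  have "walk E (rev (z#zs))" using 3 by simp
  moreover have "E z x" using 3 by simp
  ultimately show ?case using walk_append_single[of "rev (z#zs)" E x] by simp
qed auto

lemma walk_take: "walk E xs \<Longrightarrow> 0 < n \<Longrightarrow> walk E (take n xs)"
  unfolding walk_def by auto

lemma walk_drop: "walk E xs \<Longrightarrow> n < length xs \<Longrightarrow> walk E (drop n xs)"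
  unfolding walk_def
proof (intro conjI allI impI)
  fix i assume a: "xs \<noteq> [] \<and> (\<forall>i. Suc i < length xs \<longrightarrow> E (xs ! i) (xs ! Suc i))" "n < length xs"
    "Suc i < length (drop n xs)"
  then have "E (xs ! (n+i)) (xs ! Suc (n+i))" by auto
  then show "E (drop n xs ! i) (drop n xs ! Suc i)" using a by simp
qed simp

lemma reduced_take: "reduced xs \<Longrightarrow> reduced (take n xs)"
  unfolding reduced_def by auto

lemma walk_map: "(\<And>u v. E u v \<Longrightarrow> E' (f u) (f v)) \<Longrightarrow> walk E xs \<Longrightarrow> walk E' (map f xs)"
  by (induction xs rule: induct_list012) auto

lemma reduced_map: "inj_on f (set xs) \<Longrightarrow> reduced xs \<Longrightarrow> reduced (map f xs)"
proof (induction xs rule: induct_list012)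
  case (3 x z zs)
  then show ?case by (cases zs) (auto simp: inj_on_def)
qed auto

lemma walk_set: "walk E xs \<Longrightarrow> (\<And>u v. E u v \<Longrightarrow> u \<in> V \<and> v \<in> V) \<Longrightarrow> hd xs \<in> V \<Longrightarrow> set xs \<subseteq> V"
proof (induction xs rule: induct_list012)
  case (3 x z zs)
  then show ?case by auto
qed auto

lemma walk_reduce:
  assumes "walk E xs"
  shows "\<exists>ys. walk E ys \<and> reduced ys \<and> hd ys = hd xs \<and> last ys = last xs \<and> set ys \<subseteq> set xs"
  using assms
proof (induction "length xs" arbitrary: xs rule: less_induct)
  case less
  show ?case
  proof (cases "reduced xs")
    case True then show ?thesis using less by blast
  next
    case False
    then obtain i where i: "i + 2 < length xs" "xs ! i = xs ! (i+2)" unfolding reduced_def by auto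
    define zs where "zs = take (Suc i) xs @ drop (i+3) xs"
    have len: "length zs < length xs" using i by (simp add: zs_def)
    have wz: "walk E zs"
    proof (cases "i + 3 < length xs")
      case True
      have w1: "walk E (take (Suc i) xs)" using walk_take[OF less.prems] by simp
      have dne: "drop (i+3) xs \<noteq> []" using True by simp
      have w2: "walk E (drop (i+3) xs)" using walk_drop[OF less.prems True] .
      have "E (xs ! (i+2)) (xs ! (i+3))" using less.prems True unfolding walk_def
        by (metis add_Suc_right numeral_2_eq_2 numeral_3_eq_3)
      moreover have "last (take (Suc i) xs) = xs ! i" using i by (simp add: take_Suc_conv_app_nth)
      moreover have "hd (drop (i+3) xs) = xs ! (i+3)" using True by (simp add: hd_drop_conv_nth)
      ultimately show ?thesis unfolding zs_def using w1 w2 i by (intro walk_append) auto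
    next
      case False
      then show ?thesis unfolding zs_def using walk_take[OF less.prems, of "Suc i"] by simp
    qed
    have hz: "hd zs = hd xs" using i by (simp add: zs_def hd_append)
    have lz: "last zs = last xs"
    proof (cases "i + 3 < length xs")
      case True then show ?thesis by (simp add: zs_def)
    next
      case False
      then have "length xs = i + 3" using i by simp
      moreover have ne: "xs \<noteq> []" using i by auto
      ultimately have "last xs = xs ! (i+2)" using last_conv_nth[OF ne] by simp
      moreover have "last zs = xs ! i" using False i by (simp add: zs_def take_Suc_conv_app_nth)
      ultimately show ?thesis using i by simp
    qed
    have sz: "set zs \<subseteq> set xs" unfolding zs_def
      by (metis Un_subset_iff set_append set_drop_subset set_take_subset)
    from less.hyps[OF len wz] obtain ys where "walk E ys \<and> reduced ys \<and> hd ys = hd zs \<and> last ys = last zs \<and> set ys \<subseteq> set zs" by blast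
    then show ?thesis using hz lz sz by (intro exI[of _ ys]) auto
  qed
qed


lemma last_join: "xs \<noteq> [] \<Longrightarrow> ys \<noteq> [] \<Longrightarrow> last xs = hd ys \<Longrightarrow> last (xs @ tl ys) = last ys"
  by (cases ys) auto

locale tree =
  fixes V :: "'v set" and E :: "'v \<Rightarrow> 'v \<Rightarrow> bool"
  assumes tr: "is_tree V E"
begin

lemma E_V: "E u v \<Longrightarrow> u \<in> V \<and> v \<in> V" using tr unfolding is_tree_def by blast
lemma E_sym: "E u v \<Longrightarrow> E v u" using tr unfolding is_tree_def by blast
lemma E_irrefl: "\<not> E v v" using tr unfolding is_tree_def by blast
lemma V_ne: "V \<noteq> {}" using tr unfolding is_tree_def by blast

definition path :: "'v \<Rightarrow> 'v \<Rightarrow> 'v list" where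
  "path u v = (THE xs. walk E xs \<and> reduced xs \<and> hd xs = u \<and> last xs = v)"

lemma ex1_path: "u \<in> V \<Longrightarrow> v \<in> V \<Longrightarrow> \<exists>!xs. walk E xs \<and> reduced xs \<and> hd xs = u \<and> last xs = v"
  using tr unfolding is_tree_def by blast

lemma path: assumes "u \<in> V" "v \<in> V"
  shows "walk E (path u v) \<and> reduced (path u v) \<and> hd (path u v) = u \<and> last (path u v) = v"
  unfolding path_def using theI'[OF ex1_path[OF assms]] .

lemma path_walk: "u \<in> V \<Longrightarrow> v \<in> V \<Longrightarrow> walk E (path u v)" using path by blast
lemma path_reduced: "u \<in> V \<Longrightarrow> v \<in> V \<Longrightarrow> reduced (path u v)" using path by blast
lemma path_hd: "u \<in> V \<Longrightarrow> v \<in> V \<Longrightarrow> hd (path u v) = u" using path by blast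
lemma path_last: "u \<in> V \<Longrightarrow> v \<in> V \<Longrightarrow> last (path u v) = v" using path by blast
lemma path_ne: "u \<in> V \<Longrightarrow> v \<in> V \<Longrightarrow> path u v \<noteq> []" using path_walk walk_Nil by metis

lemma path_unique: "u \<in> V \<Longrightarrow> v \<in> V \<Longrightarrow> walk E xs \<Longrightarrow> reduced xs \<Longrightarrow> hd xs = u \<Longrightarrow> last xs = v
   \<Longrightarrow> xs = path u v"
  using ex1_path path by metis

lemma walk_setV: "walk E xs \<Longrightarrow> hd xs \<in> V \<Longrightarrow> set xs \<subseteq> V"
  using walk_set E_V by metis

lemma path_set: "u \<in> V \<Longrightarrow> v \<in> V \<Longrightarrow> set (path u v) \<subseteq> V"
  using walk_setV path by metis

lemma path_self: "u \<in> V \<Longrightarrow> path u u = [u]"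
  using path_unique[of u u "[u]"] by simp

lemma path_sub_walk:
  assumes "walk E xs" "hd xs \<in> V"
  shows "set (path (hd xs) (last xs)) \<subseteq> set xs"
proof -
  obtain ys where ys: "walk E ys" "reduced ys" "hd ys = hd xs" "last ys = last xs" "set ys \<subseteq> set xs"
    using walk_reduce[OF assms(1)] by blast
  have ne: "xs \<noteq> []" using assms(1) by auto
  have "last xs \<in> V" using walk_setV[OF assms] ne by auto
  then have "ys = path (hd xs) (last xs)" using path_unique ys assms(2) by metis
  then show ?thesis using ys by simp
qed

lemma path_prefix:
  assumes "u \<in> V" "v \<in> V" "x \<in> set (path u v)"
  shows "set (path u x) \<subseteq> set (path u v)"
proof -
  obtain i where i: "i < length (path u v)" "path u v ! i = x" using assms(3) by (meson in_set_conv_nth)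
  let ?t = "take (Suc i) (path u v)"
  have xV: "x \<in> V" using path_set assms by blast
  have "walk E ?t" using walk_take path_walk assms by blast
  moreover have "reduced ?t" using reduced_take path_reduced assms by blast
  moreover have "hd ?t = u" using path_hd[OF assms(1,2)] path_ne[OF assms(1,2)] by simp
  moreover have "last ?t = x" using i by (simp add: take_Suc_conv_app_nth)
  ultimately have "?t = path u x" using path_unique assms xV by blast
  then show ?thesis by (metis set_take_subset)
qed

lemma path_through:
  assumes "u \<in> V" "x \<in> V" "y \<in> V"
  shows "set (path x y) \<subseteq> set (path u x) \<union> set (path u y)"
proof -
  let ?w = "rev (path u x) @ tl (path u y)"
  have w: "walk E ?w"
    using walk_join[OF walk_rev[OF _ path_walk[OF assms(1,2)]] path_walk[OF assms(1,3)]]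
      E_sym path_hd path_ne assms by (simp add: last_rev)
  have h: "hd ?w = x" using path_last path_ne assms by (simp add: hd_append hd_rev)
  have l: "last ?w = y" using last_join[of "rev (path u x)" "path u y"] path_last path_ne path_hd assms
    by (simp add: last_rev)
  have "set (path x y) \<subseteq> set ?w" using path_sub_walk[OF w] h l assms by simp
  also have "\<dots> \<subseteq> set (path u x) \<union> set (path u y)"
  proof -
    have "set (tl (path u y)) \<subseteq> set (path u y)" by (cases "path u y") auto
    then show ?thesis by auto
  qed
  finally show ?thesis .
qed

lemma adj_path:
  assumes r: "r \<in> V" and e: "E x y"
  shows "path r y = path r x @ [y] \<or> path r x = path r y @ [x]"
proof -
  have xV: "x \<in> V" and yV: "y \<in> V" using E_V e by auto
  let ?P = "path r x"
  have ne: "?P \<noteq> []" using path_ne r xV .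
  show ?thesis
  proof (cases "2 \<le> length ?P \<and> ?P ! (length ?P - 2) = y")
    case True
    let ?t = "take (length ?P - 1) ?P"
    have "walk E ?t" using walk_take[OF path_walk[OF r xV], of "length ?P - 1"] True by simp
    moreover have "reduced ?t" using reduced_take path_reduced r xV by blast
    moreover have "hd ?t = r" using path_hd[OF r xV] ne True by simp
    moreover have "last ?t = y"
    proof -
      have eq: "length ?P - 1 = Suc (length ?P - 2)" using True by linarith
      have "take (length ?P - 1) ?P = take (length ?P - 2) ?P @ [?P ! (length ?P - 2)]"
        unfolding eq using True by (intro take_Suc_conv_app_nth) linarith
      then show ?thesis using True by simp
    qed
    ultimately have "?t = path r y" using path_unique[OF r yV, of ?t] by simp
    moreover have "?P = ?t @ [x]" using path_last[OF r xV] ne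
      by (metis append_butlast_last_id butlast_conv_take)
    ultimately show ?thesis by simp
  next
    case False
    have "walk E (?P @ [y])" using walk_append_single[OF ne] path_walk path_last r xV e by simp
    moreover have "reduced (?P @ [y])" unfolding reduced_append_single using path_reduced[OF r xV] False by blast
    moreover have "hd (?P @ [y]) = r" using path_hd r xV ne by simp
    moreover have "last (?P @ [y]) = y" by simp
    ultimately show ?thesis using path_unique[OF r yV, of "?P @ [y]"] by simp
  qed
qed

lemma map_path:
  assumes "\<And>u v. E u v \<Longrightarrow> E (f u) (f v)" "f ` V \<subseteq> V" "inj_on f V" "u \<in> V" "v \<in> V"
  shows "map f (path u v) = path (f u) (f v)"
proof -
  have "walk E (map f (path u v))" using walk_map assms path_walk by metis
  moreover have "reduced (map f (path u v))"
    using reduced_map path_reduced path_set assms inj_on_subset by metis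
  moreover have "hd (map f (path u v)) = f u" using path_hd path_ne assms by (simp add: hd_map)
  moreover have "last (map f (path u v)) = f v" using path_last path_ne assms by (simp add: last_map)
  moreover have "f u \<in> V" "f v \<in> V" using assms by auto
  ultimately show ?thesis using path_unique[of "f u" "f v" "map f (path u v)"] by simp
qed

end


lemma Bij_mult: "f \<in> Bij S \<Longrightarrow> g \<in> Bij S \<Longrightarrow> f \<otimes>\<^bsub>BijGroup S\<^esub> g = compose S f g"
  by (simp add: BijGroup_def)
lemma Bij_carrier[simp]: "carrier (BijGroup S) = Bij S" by (simp add: BijGroup_def)
lemma Bij_one[simp]: "\<one>\<^bsub>BijGroup S\<^esub> = (\<lambda>x\<in>S. x)" by (simp add: BijGroup_def)
lemma Bij_bij: "f \<in> Bij S \<Longrightarrow> bij_betw f S S" by (simp add: Bij_def)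
lemma Bij_in: "f \<in> Bij S \<Longrightarrow> x \<in> S \<Longrightarrow> f x \<in> S" using Bij_imp_funcset by blast
lemma Bij_inj: "f \<in> Bij S \<Longrightarrow> inj_on f S" using Bij_bij bij_betw_def by blast

lemma walk_map_on:
  assumes "walk E xs" "set xs \<subseteq> W" "\<And>u v. u \<in> W \<Longrightarrow> v \<in> W \<Longrightarrow> E u v \<Longrightarrow> E' (f u) (f v)"
  shows "walk E' (map f xs)"
  using assms by (induction xs rule: induct_list012) auto

context tree begin

lemma subtree_transport:
  fixes W :: "'v set" and f :: "'v \<Rightarrow> 'w"
  assumes WV: "W \<subseteq> V" and Wne: "W \<noteq> {}" and cl: "\<And>x y. x \<in> W \<Longrightarrow> y \<in> W \<Longrightarrow> set (path x y) \<subseteq> W"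
    and inj: "inj_on f W"
  shows "is_tree (f ` W) (\<lambda>a b. \<exists>x\<in>W. \<exists>y\<in>W. a = f x \<and> b = f y \<and> E x y)"
proof -
  define E' where "E' = (\<lambda>a b. \<exists>x\<in>W. \<exists>y\<in>W. a = f x \<and> b = f y \<and> E x y)"
  define h where "h = inv_into W f"
  have hf: "\<And>x. x \<in> W \<Longrightarrow> h (f x) = x" unfolding h_def using inj by simp
  have E'V: "\<And>a b. E' a b \<Longrightarrow> a \<in> f ` W \<and> b \<in> f ` W" unfolding E'_def by blast
  have ex: "\<And>x y. x \<in> W \<Longrightarrow> y \<in> W \<Longrightarrow> walk E' (map f (path x y)) \<and> reduced (map f (path x y))
         \<and> hd (map f (path x y)) = f x \<and> last (map f (path x y)) = f y"
  proof -
    fix x y assume xy: "x \<in> W" "y \<in> W"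
    then have xyV: "x \<in> V" "y \<in> V" using WV by auto
    have "walk E' (map f (path x y))"
      using walk_map_on[OF path_walk[OF xyV] cl[OF xy], of E' f] unfolding E'_def by blast
    moreover have "reduced (map f (path x y))"
      using reduced_map[OF inj_on_subset[OF inj cl[OF xy]] path_reduced[OF xyV]] .
    moreover have "hd (map f (path x y)) = f x" using path_hd path_ne xyV by (simp add: hd_map)
    moreover have "last (map f (path x y)) = f y" using path_last path_ne xyV by (simp add: last_map)
    ultimately show "?thesis x y" by blast
  qed
  have uq: "\<And>x y ys. x \<in> W \<Longrightarrow> y \<in> W \<Longrightarrow> walk E' ys \<Longrightarrow> reduced ys \<Longrightarrow> hd ys = f x \<Longrightarrow> last ys = f y
     \<Longrightarrow> ys = map f (path x y)"
  proof -
    fix x y ys assume xy: "x \<in> W" "y \<in> W" and ys: "walk E' ys" "reduced ys" "hd ys = f x" "last ys = f y"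
    have ne: "ys \<noteq> []" using ys by auto
    have sys: "set ys \<subseteq> f ` W"
      by (rule walk_set[OF ys(1), of "f ` W"]) (use E'V ys(3) xy in auto)
    have "walk E (map h ys)"
    proof (rule walk_map_on[OF ys(1) sys])
      fix a b assume "a \<in> f ` W" "b \<in> f ` W" "E' a b"
      then show "E (h a) (h b)" unfolding E'_def using hf by auto
    qed
    moreover have "reduced (map h ys)"
      using reduced_map[OF inj_on_subset[OF _ sys] ys(2)] inj_on_inv_into[of "f ` W" f W] unfolding h_def by auto
    moreover have "hd (map h ys) = x" using ys ne hf xy by (simp add: hd_map)
    moreover have "last (map h ys) = y" using ys ne hf xy by (simp add: last_map)
    ultimately have "map h ys = path x y" using path_unique WV xy by blast
    then have "map f (map h ys) = map f (path x y)" by simp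
    moreover have "map f (map h ys) = ys"
    proof -
      have "\<forall>a\<in>set ys. f (h a) = a" using sys unfolding h_def by (auto simp: f_inv_into_f)
      then show ?thesis by (induction ys) auto
    qed
    ultimately show "ys = map f (path x y)" by simp
  qed
  have "is_tree (f ` W) E'"
    unfolding is_tree_def
  proof (intro conjI allI impI ballI)
    show "f ` W \<noteq> {}" using Wne by simp
  next
    fix u v assume "E' u v" then show "u \<in> f ` W" "v \<in> f ` W" using E'V by auto
  next
    fix u v assume "E' u v" then show "E' v u" unfolding E'_def using E_sym by blast
  next
    fix v show "\<not> E' v v"
    proof
      assume "E' v v"
      then obtain x y where "x \<in> W" "y \<in> W" "v = f x" "v = f y" "E x y" unfolding E'_def by blast
      then have "x = y" using inj by (simp add: inj_on_def)
      then show False using \<open>E x y\<close> E_irrefl by simp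
    qed
  next
    fix a b assume "a \<in> f ` W" "b \<in> f ` W"
    then obtain x y where xy: "x \<in> W" "y \<in> W" "a = f x" "b = f y" by blast
    show "\<exists>!xs. walk E' xs \<and> reduced xs \<and> hd xs = a \<and> last xs = b"
    proof (rule ex1I[of _ "map f (path x y)"])
      show "walk E' (map f (path x y)) \<and> reduced (map f (path x y)) \<and> hd (map f (path x y)) = a \<and> last (map f (path x y)) = b"
        using ex[OF xy(1,2)] xy(3,4) by simp
    next
      fix ys assume "walk E' ys \<and> reduced ys \<and> hd ys = a \<and> last ys = b"
      then show "ys = map f (path x y)" using uq[OF xy(1,2), of ys] xy(3,4) by simp
    qed
  qed
  then show ?thesis unfolding E'_def .
qed

end

lemma FA_transfer:
  fixes G :: "('g,'b) monoid_scheme" and V :: "'v set"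
  assumes FA: "property_FA G" and grp: "group G" and T: "is_tree V E"
    and hom: "\<Phi> \<in> hom G (BijGroup V)"
    and pres: "\<And>g u v. g \<in> carrier G \<Longrightarrow> E u v \<Longrightarrow> E (\<Phi> g u) (\<Phi> g v)"
    and noinv: "\<And>g u v. g \<in> carrier G \<Longrightarrow> E u v \<Longrightarrow> \<not> (\<Phi> g u = v \<and> \<Phi> g v = u)"
  shows "\<exists>v\<in>V. \<forall>g\<in>carrier G. \<Phi> g v = v"
proof -
  interpret tree V E using T by unfold_locales
  interpret Gg: group G using grp .
  have PB: "\<And>g. g \<in> carrier G \<Longrightarrow> \<Phi> g \<in> Bij V" using hom_in_carrier[OF hom] by simp
  have Pin: "\<And>g x. g \<in> carrier G \<Longrightarrow> x \<in> V \<Longrightarrow> \<Phi> g x \<in> V" by (rule Bij_in[OF PB])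
  have Pinj: "\<And>g. g \<in> carrier G \<Longrightarrow> inj_on (\<Phi> g) V" by (rule Bij_inj[OF PB])
  have Pmult: "\<And>g k x. g \<in> carrier G \<Longrightarrow> k \<in> carrier G \<Longrightarrow> x \<in> V \<Longrightarrow> \<Phi> (g \<otimes>\<^bsub>G\<^esub> k) x = \<Phi> g (\<Phi> k x)"
  proof -
    fix g k x assume a: "g \<in> carrier G" "k \<in> carrier G" "x \<in> V"
    have "\<Phi> (g \<otimes>\<^bsub>G\<^esub> k) = \<Phi> g \<otimes>\<^bsub>BijGroup V\<^esub> \<Phi> k" using hom_mult[OF hom a(1,2)] .
    also have "\<dots> = compose V (\<Phi> g) (\<Phi> k)" using Bij_mult PB a by blast
    finally show "\<Phi> (g \<otimes>\<^bsub>G\<^esub> k) x = \<Phi> g (\<Phi> k x)" using a(3) by (simp add: compose_def)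
  qed
  have Pinv: "\<And>g x. g \<in> carrier G \<Longrightarrow> x \<in> V \<Longrightarrow> \<Phi> g (\<Phi> (inv\<^bsub>G\<^esub> g) x) = x"
  proof -
    fix g x assume a: "g \<in> carrier G" "x \<in> V"
    have ig: "inv\<^bsub>G\<^esub> g \<in> carrier G" using grp a by simp
    have "\<Phi> (g \<otimes>\<^bsub>G\<^esub> inv\<^bsub>G\<^esub> g) = \<Phi> \<one>\<^bsub>G\<^esub>" using group.r_inv[OF grp a(1)] by simp
    also have "\<dots> = (\<lambda>x\<in>V. x)" using hom_one[OF hom grp group_BijGroup] by simp
    finally show "\<Phi> g (\<Phi> (inv\<^bsub>G\<^esub> g) x) = x" using Pmult[OF a(1) ig a(2)] a(2) by simp
  qed
  obtain v where vV: "v \<in> V" using V_ne by blast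
  define W where "W = (\<Union>k\<in>carrier G. set (path v (\<Phi> k v)))"
  have WV: "W \<subseteq> V" unfolding W_def using path_set vV Pin by blast
  have onecar: "\<one>\<^bsub>G\<^esub> \<in> carrier G" using grp by simp
  have vW: "v \<in> W"
  proof -
    have "hd (path v (\<Phi> \<one>\<^bsub>G\<^esub> v)) = v" "path v (\<Phi> \<one>\<^bsub>G\<^esub> v) \<noteq> []"
      using path_hd[OF vV Pin[OF onecar vV]] path_ne[OF vV Pin[OF onecar vV]] by auto
    then have "v \<in> set (path v (\<Phi> \<one>\<^bsub>G\<^esub> v))" using hd_in_set by metis
    then show ?thesis unfolding W_def using onecar by blast
  qed
  have endW: "\<And>k. k \<in> carrier G \<Longrightarrow> \<Phi> k v \<in> W"
  proof -
    fix k assume k: "k \<in> carrier G"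
    have "last (path v (\<Phi> k v)) = \<Phi> k v" "path v (\<Phi> k v) \<noteq> []"
      using path_last[OF vV Pin[OF k vV]] path_ne[OF vV Pin[OF k vV]] by auto
    then have "\<Phi> k v \<in> set (path v (\<Phi> k v))" using last_in_set by metis
    then show "\<Phi> k v \<in> W" unfolding W_def using k by blast
  qed
  have prefW: "\<And>x. x \<in> W \<Longrightarrow> set (path v x) \<subseteq> W"
  proof -
    fix x assume "x \<in> W"
    then obtain k where k: "k \<in> carrier G" "x \<in> set (path v (\<Phi> k v))" unfolding W_def by blast
    then have "set (path v x) \<subseteq> set (path v (\<Phi> k v))" using path_prefix vV Pin by blast
    then show "set (path v x) \<subseteq> W" using k unfolding W_def by blast
  qed
  have cl: "\<And>x y. x \<in> W \<Longrightarrow> y \<in> W \<Longrightarrow> set (path x y) \<subseteq> W"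
  proof -
    fix x y assume xy: "x \<in> W" "y \<in> W"
    have "set (path x y) \<subseteq> set (path v x) \<union> set (path v y)"
      using path_through[OF vV] xy WV by blast
    then show "set (path x y) \<subseteq> W" using prefW[OF xy(1)] prefW[OF xy(2)] by blast
  qed
  have inv: "\<And>g x. g \<in> carrier G \<Longrightarrow> x \<in> W \<Longrightarrow> \<Phi> g x \<in> W"
  proof -
    fix g x assume g: "g \<in> carrier G" and "x \<in> W"
    then obtain k where k: "k \<in> carrier G" "x \<in> set (path v (\<Phi> k v))" unfolding W_def by blast
    have gk: "g \<otimes>\<^bsub>G\<^esub> k \<in> carrier G" using grp g k by (simp add: monoid.m_closed group.is_monoid)
    have "map (\<Phi> g) (path v (\<Phi> k v)) = path (\<Phi> g v) (\<Phi> g (\<Phi> k v))"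
      by (rule map_path) (use pres[OF g] Pin[OF g] Pinj[OF g] vV Pin[OF k(1) vV] in auto)
    also have "\<dots> = path (\<Phi> g v) (\<Phi> (g \<otimes>\<^bsub>G\<^esub> k) v)" using Pmult g k vV by simp
    finally have eq: "map (\<Phi> g) (path v (\<Phi> k v)) = path (\<Phi> g v) (\<Phi> (g \<otimes>\<^bsub>G\<^esub> k) v)" .
    moreover have "\<Phi> g x \<in> set (map (\<Phi> g) (path v (\<Phi> k v)))" using k(2) by simp
    ultimately have "\<Phi> g x \<in> set (path (\<Phi> g v) (\<Phi> (g \<otimes>\<^bsub>G\<^esub> k) v))" by simp
    then show "\<Phi> g x \<in> W" using cl[OF endW[OF g] endW[OF gk]] by blast
  qed
  define P where "P = (\<lambda>x p. fst p \<in> carrier G \<and> snd p < length (path v (\<Phi> (fst p) v)) \<and> path v (\<Phi> (fst p) v) ! snd p = x)"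
  define enc where "enc = (\<lambda>x. SOME p. P x p)"
  have encP: "\<And>x. x \<in> W \<Longrightarrow> P x (enc x)"
  proof -
    fix x assume "x \<in> W"
    then obtain k where k: "k \<in> carrier G" "x \<in> set (path v (\<Phi> k v))" unfolding W_def by blast
    then obtain i where "i < length (path v (\<Phi> k v))" "path v (\<Phi> k v) ! i = x" by (meson in_set_conv_nth)
    then have "P x (k, i)" using k unfolding P_def by simp
    then show "P x (enc x)" unfolding enc_def by (rule someI)
  qed
  have inj: "inj_on enc W"
  proof (rule inj_onI)
    fix x y assume xy: "x \<in> W" "y \<in> W" "enc x = enc y"
    have "path v (\<Phi> (fst (enc x)) v) ! snd (enc x) = x" using encP[OF xy(1)] unfolding P_def by blast
    moreover have "path v (\<Phi> (fst (enc y)) v) ! snd (enc y) = y" using encP[OF xy(2)] unfolding P_def by blast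
    ultimately show "x = y" using xy(3) by metis
  qed
  define V' where "V' = enc ` W"
  define E' where "E' = (\<lambda>a b. \<exists>x\<in>W. \<exists>y\<in>W. a = enc x \<and> b = enc y \<and> E x y)"
  define dec where "dec = inv_into W enc"
  have de: "\<And>x. x \<in> W \<Longrightarrow> dec (enc x) = x" unfolding dec_def using inj by simp
  have ed: "\<And>a. a \<in> V' \<Longrightarrow> enc (dec a) = a" unfolding dec_def V'_def by (simp add: f_inv_into_f)
  have decW: "\<And>a. a \<in> V' \<Longrightarrow> dec a \<in> W" unfolding dec_def V'_def by (simp add: inv_into_into)
  define \<phi> where "\<phi> = (\<lambda>g. \<lambda>a\<in>V'. enc (\<Phi> g (dec a)))"
  have Wne: "W \<noteq> {}" using vW by blast
  have Tt: "is_tree V' E'" unfolding V'_def E'_def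
    by (rule subtree_transport[OF WV Wne cl inj])
  have phiV: "\<And>g a. g \<in> carrier G \<Longrightarrow> a \<in> V' \<Longrightarrow> \<phi> g a \<in> V'"
    unfolding \<phi>_def V'_def using inv decW[unfolded V'_def] by auto
  have phiB: "\<And>g. g \<in> carrier G \<Longrightarrow> \<phi> g \<in> Bij V'"
  proof -
    fix g assume g: "g \<in> carrier G"
    have ig: "inv\<^bsub>G\<^esub> g \<in> carrier G" using grp g by simp
    have "inj_on (\<phi> g) V'"
    proof (rule inj_onI)
      fix a b assume ab: "a \<in> V'" "b \<in> V'" "\<phi> g a = \<phi> g b"
      then have "enc (\<Phi> g (dec a)) = enc (\<Phi> g (dec b))" unfolding \<phi>_def by simp
      then have "\<Phi> g (dec a) = \<Phi> g (dec b)"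
        by (rule inj_onD[OF inj _ inv[OF g decW[OF ab(1)]] inv[OF g decW[OF ab(2)]]])
      then have "dec a = dec b"
        by (rule inj_onD[OF Pinj[OF g]]) (use WV decW[OF ab(1)] decW[OF ab(2)] in auto)
      then have "enc (dec a) = enc (dec b)" by simp
      then show "a = b" using ed[OF ab(1)] ed[OF ab(2)] by simp
    qed
    moreover have "\<phi> g ` V' = V'"
    proof
      show "\<phi> g ` V' \<subseteq> V'" using phiV g by blast
    next
      show "V' \<subseteq> \<phi> g ` V'"
      proof
        fix a assume a: "a \<in> V'"
        let ?y = "\<Phi> (inv\<^bsub>G\<^esub> g) (dec a)"
        have yW: "?y \<in> W" using inv ig decW a by blast
        have eV: "enc ?y \<in> V'" unfolding V'_def using yW by simp
        have "\<phi> g (enc ?y) = enc (\<Phi> g ?y)" unfolding \<phi>_def using eV yW de by simp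
        also have "\<dots> = a" using Pinv[OF g] decW[OF a] WV ed[OF a] by auto
        finally have "a = \<phi> g (enc ?y)" by simp
        then show "a \<in> \<phi> g ` V'" using eV by blast
      qed
    qed
    moreover have "\<phi> g \<in> extensional V'" unfolding \<phi>_def by simp
    ultimately show "\<phi> g \<in> Bij V'" unfolding Bij_def bij_betw_def by simp
  qed
  have act: "tree_action G V' E' \<phi>" unfolding tree_action_def
  proof (intro conjI ballI allI impI)
    show "\<phi> \<in> hom G (BijGroup V')"
    proof (rule homI)
      fix g assume "g \<in> carrier G" then show "\<phi> g \<in> carrier (BijGroup V')" using phiB by simp
    next
      fix g k assume g: "g \<in> carrier G" and k: "k \<in> carrier G"
      have gk: "g \<otimes>\<^bsub>G\<^esub> k \<in> carrier G" using grp g k by (simp add: monoid.m_closed group.is_monoid)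
      have "\<phi> (g \<otimes>\<^bsub>G\<^esub> k) = compose V' (\<phi> g) (\<phi> k)"
      proof (rule ext)
        fix a show "\<phi> (g \<otimes>\<^bsub>G\<^esub> k) a = compose V' (\<phi> g) (\<phi> k) a"
        proof (cases "a \<in> V'")
          case True
          have "\<phi> (g \<otimes>\<^bsub>G\<^esub> k) a = enc (\<Phi> g (\<Phi> k (dec a)))"
            unfolding \<phi>_def using True Pmult[OF g k] decW[OF True] WV by auto
          also have "\<dots> = \<phi> g (\<phi> k a)" unfolding \<phi>_def using True phiV[OF k True] inv k decW de
            by (simp add: \<phi>_def)
          finally show ?thesis using True by (simp add: compose_def)
        next
          case False then show ?thesis by (simp add: \<phi>_def compose_def)
        qed
      qed
      then show "\<phi> (g \<otimes>\<^bsub>G\<^esub> k) = \<phi> g \<otimes>\<^bsub>BijGroup V'\<^esub> \<phi> k" using Bij_mult phiB g k by metis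
    qed
  next
    fix g u w assume g: "g \<in> carrier G" and e: "E' u w"
    then obtain x y where xy: "x \<in> W" "y \<in> W" "u = enc x" "w = enc y" "E x y" unfolding E'_def by blast
    have "\<phi> g u = enc (\<Phi> g x)" "\<phi> g w = enc (\<Phi> g y)" unfolding \<phi>_def V'_def using xy de by auto
    then show "E' (\<phi> g u) (\<phi> g w)" unfolding E'_def using xy inv g pres by blast
  qed
  have ni: "without_inversion G E' \<phi>" unfolding without_inversion_def
  proof (intro ballI allI impI notI)
    fix g u w assume g: "g \<in> carrier G" and e: "E' u w" and sw: "\<phi> g u = w \<and> \<phi> g w = u"
    then obtain x y where xy: "x \<in> W" "y \<in> W" "u = enc x" "w = enc y" "E x y" unfolding E'_def by blast
    have "\<phi> g u = enc (\<Phi> g x)" "\<phi> g w = enc (\<Phi> g y)" unfolding \<phi>_def V'_def using xy de by auto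
    then have "enc (\<Phi> g x) = enc y" "enc (\<Phi> g y) = enc x" using sw xy by auto
    then have "\<Phi> g x = y" "\<Phi> g y = x"
      using inj_onD[OF inj _ inv[OF g xy(1)] xy(2)] inj_onD[OF inj _ inv[OF g xy(2)] xy(1)] by auto
    then show False using noinv[OF g xy(5)] by blast
  qed
  obtain a where a: "a \<in> V'" "\<forall>g\<in>carrier G. \<phi> g a = a"
    using FA[unfolded property_FA_def, rule_format, of V' E' \<phi>] Tt act ni by blast
  have "\<forall>g\<in>carrier G. \<Phi> g (dec a) = dec a"
  proof
    fix g assume g: "g \<in> carrier G"
    have "enc (\<Phi> g (dec a)) = enc (dec a)" using a g ed unfolding \<phi>_def by simp
    then show "\<Phi> g (dec a) = dec a" using inj_onD[OF inj _ inv[OF g decW[OF a(1)]] decW[OF a(1)]] by auto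
  qed
  then show ?thesis using decW a(1) WV by blast
qed


locale ltree = tree V E
  for \<Omega> \<Delta> :: "'c set" and V :: "'v set" and E and VO VD :: "'v set" and c :: "'v \<times> 'v \<Rightarrow> 'c" +
  assumes leg: "legal_coloured_biregular_tree \<Omega> \<Delta> V E VO VD c"
begin

lemma VOD: "VO \<union> VD = V" "VO \<inter> VD = {}" using leg unfolding legal_coloured_biregular_tree_def by auto
lemma bip: "E u v \<Longrightarrow> (u \<in> VO \<and> v \<in> VD) \<or> (u \<in> VD \<and> v \<in> VO)"
  using leg unfolding legal_coloured_biregular_tree_def by blast
lemma VO_V: "x \<in> VO \<Longrightarrow> x \<in> V" and VD_V: "x \<in> VD \<Longrightarrow> x \<in> V" using VOD by auto
lemma VO_VD: "x \<in> V \<Longrightarrow> x \<notin> VO \<longleftrightarrow> x \<in> VD" using VOD by auto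

definition S :: "'v \<Rightarrow> 'c set" where "S x = (if x \<in> VO then \<Omega> else \<Delta>)"

lemma col_bij: "x \<in> V \<Longrightarrow> bij_betw c (arcs_out E x) (S x)"
  using leg VOD unfolding legal_coloured_biregular_tree_def S_def by auto


lemma c_out: "E x u \<Longrightarrow> c (x, u) \<in> S x"
  using col_bij[of x] E_V unfolding bij_betw_def arcs_out_def by blast

lemma c_inj: "E x u \<Longrightarrow> E x w \<Longrightarrow> c (x, u) = c (x, w) \<Longrightarrow> u = w"
proof -
  assume a: "E x u" "E x w" "c (x, u) = c (x, w)"
  have "inj_on c (arcs_out E x)" using col_bij[of x] E_V a(1) unfolding bij_betw_def by blast
  moreover have "(x,u) \<in> arcs_out E x" "(x,w) \<in> arcs_out E x" using a unfolding arcs_out_def by auto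
  ultimately show "u = w" using a(3) by (meson inj_onD prod.inject)
qed

lemma c_surj: "x \<in> V \<Longrightarrow> a \<in> S x \<Longrightarrow> \<exists>u. E x u \<and> c (x, u) = a"
proof -
  assume a: "x \<in> V" "a \<in> S x"
  then have "a \<in> c ` arcs_out E x" using col_bij[OF a(1)] unfolding bij_betw_def by simp
  then show ?thesis unfolding arcs_out_def by auto
qed

definition nb :: "'v \<Rightarrow> 'c \<Rightarrow> 'v" where "nb x a = (THE u. E x u \<and> c (x, u) = a)"

lemma nb_eq: "E x u \<Longrightarrow> nb x (c (x, u)) = u"
  unfolding nb_def by (rule the_equality) (use c_inj in auto)

lemma nb_prop: assumes "x \<in> V" "a \<in> S x" shows "E x (nb x a)" "c (x, nb x a) = a"
proof -
  obtain u where u: "E x u" "c (x, u) = a" using c_surj assms by blast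
  then have "nb x a = u" using nb_eq by blast
  then show "E x (nb x a)" "c (x, nb x a) = a" using u by auto
qed

definition ic :: "'v \<Rightarrow> 'c" where "ic z = (SOME col. col \<in> c ` arcs_in E z)"

lemma ic_eq: assumes "E y z" shows "c (y, z) = ic z"
proof -
  have zV: "z \<in> V" using E_V assms by blast
  have "card (c ` arcs_in E z) = 1" using leg zV unfolding legal_coloured_biregular_tree_def by blast
  then obtain col where col: "c ` arcs_in E z = {col}" using card_1_singletonE by blast
  have "(y, z) \<in> arcs_in E z" using assms unfolding arcs_in_def by auto
  then have "c (y, z) = col" using col by blast
  moreover have "ic z = col" unfolding ic_def col by simp
  ultimately show ?thesis by simp
qed

lemma local_action_eq: "a \<in> T \<Longrightarrow> local_action T E c g x a = c (g x, g (nb x a))"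
  unfolding local_action_def nb_def by simp

lemma two_nb:
  assumes "\<exists>a\<in>\<Omega>. \<exists>b\<in>\<Omega>. a \<noteq> b" "\<exists>a\<in>\<Delta>. \<exists>b\<in>\<Delta>. a \<noteq> b" "x \<in> V"
  shows "\<exists>u w. E x u \<and> E x w \<and> u \<noteq> w"
proof -
  obtain a b where ab: "a \<in> S x" "b \<in> S x" "a \<noteq> b" using assms unfolding S_def by (cases "x \<in> VO") auto
  then show ?thesis using nb_prop[OF assms(3) ab(1)] nb_prop[OF assms(3) ab(2)] by metis
qed


lemma U_D:
  assumes "g \<in> U_group \<Omega> \<Delta> M N V E VO VD c"
  shows "bij_betw g V V" "\<And>u v. u \<in> V \<Longrightarrow> v \<in> V \<Longrightarrow> E u v \<longleftrightarrow> E (g u) (g v)" "g ` VO = VO"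
    "\<And>v. v \<in> VO \<Longrightarrow> local_action \<Omega> E c g v \<in> M" "\<And>v. v \<in> VD \<Longrightarrow> local_action \<Delta> E c g v \<in> N"
  using assms unfolding U_group_def tree_aut_def by auto

lemma U_in: "g \<in> U_group \<Omega> \<Delta> M N V E VO VD c \<Longrightarrow> x \<in> V \<Longrightarrow> g x \<in> V"
  using U_D(1) bij_betw_apply by metis

lemma U_E: "g \<in> U_group \<Omega> \<Delta> M N V E VO VD c \<Longrightarrow> E u v \<Longrightarrow> E (g u) (g v)"
  using U_D(2) E_V by metis

lemma U_VD: assumes "g \<in> U_group \<Omega> \<Delta> M N V E VO VD c" shows "g ` VD = VD"
proof -
  have "VD = V - VO" using VOD by auto
  moreover have "g ` (V - VO) = g ` V - g ` VO"
    using U_D(1)[OF assms] VOD by (intro inj_on_image_set_diff) (auto simp: bij_betw_def)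
  ultimately show ?thesis using U_D(1,3)[OF assms] by (simp add: bij_betw_def)
qed

lemma U_VO_iff: assumes "g \<in> U_group \<Omega> \<Delta> M N V E VO VD c" "x \<in> V" shows "g x \<in> VO \<longleftrightarrow> x \<in> VO"
proof
  assume "x \<in> VO" then show "g x \<in> VO" using U_D(3)[OF assms(1)] by blast
next
  assume "g x \<in> VO"
  show "x \<in> VO"
  proof (rule ccontr)
    assume "x \<notin> VO"
    then have "x \<in> VD" using VOD assms(2) by auto
    then have "g x \<in> VD" using U_VD[OF assms(1)] by blast
    then show False using \<open>g x \<in> VO\<close> VOD by auto
  qed
qed

lemma U_S: "g \<in> U_group \<Omega> \<Delta> M N V E VO VD c \<Longrightarrow> x \<in> V \<Longrightarrow> S (g x) = S x"
  unfolding S_def using U_VO_iff by simp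

lemma la_mem: assumes "g \<in> U_group \<Omega> \<Delta> M N V E VO VD c" "x \<in> V"
  shows "local_action (S x) E c g x \<in> (if x \<in> VO then M else N)"
  using U_D(4,5)[OF assms(1)] assms(2) VOD unfolding S_def by auto

lemma la_comp:
  assumes g: "g \<in> U_group \<Omega> \<Delta> M N V E VO VD c" and h: "h \<in> U_group \<Omega> \<Delta> M' N' V E VO VD c"
    and x: "x \<in> V"
  shows "local_action (S x) E c (g \<circ> h) x
       = compose (S x) (local_action (S x) E c g (h x)) (local_action (S x) E c h x)"
proof (rule ext)
  fix a show "local_action (S x) E c (g \<circ> h) x a
       = compose (S x) (local_action (S x) E c g (h x)) (local_action (S x) E c h x) a"
  proof (cases "a \<in> S x")
    case True
    have e1: "E x (nb x a)" using nb_prop[OF x True] by simp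
    have e2: "E (h x) (h (nb x a))" using U_E[OF h e1] .
    have b: "local_action (S x) E c h x a = c (h x, h (nb x a))" using local_action_eq[OF True] .
    have bS: "c (h x, h (nb x a)) \<in> S x" using c_out[OF e2] U_S[OF h x] by simp
    have "local_action (S x) E c g (h x) (c (h x, h (nb x a))) = c (g (h x), g (nb (h x) (c (h x, h (nb x a)))))"
      using local_action_eq[OF bS] .
    also have "\<dots> = c (g (h x), g (h (nb x a)))" using nb_eq[OF e2] by simp
    finally show ?thesis using True b local_action_eq[OF True, of "g \<circ> h"] by (simp add: compose_def)
  next
    case False then show ?thesis by (simp add: local_action_def compose_def)
  qed
qed

lemma la_cong:
  assumes "x \<in> V" "\<And>y. y \<in> V \<Longrightarrow> g y = h y"
  shows "local_action (S x) E c g x = local_action (S x) E c h x"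
proof (rule ext)
  fix a show "local_action (S x) E c g x a = local_action (S x) E c h x a"
  proof (cases "a \<in> S x")
    case True
    have "nb x a \<in> V" using nb_prop[OF assms(1) True] E_V by blast
    then show ?thesis using local_action_eq[OF True] assms by simp
  qed (simp add: local_action_def)
qed

lemma U_comp:
  assumes M: "perm_group \<Omega> M" and N: "perm_group \<Delta> N"
    and g: "g \<in> U_group \<Omega> \<Delta> M N V E VO VD c" and h: "h \<in> U_group \<Omega> \<Delta> M N V E VO VD c"
  shows "g \<circ> h \<in> U_group \<Omega> \<Delta> M N V E VO VD c"
proof -
  have "bij_betw (g \<circ> h) V V" using U_D(1)[OF g] U_D(1)[OF h] bij_betw_trans by blast
  moreover have "\<forall>u\<in>V. \<forall>v\<in>V. E u v \<longleftrightarrow> E ((g \<circ> h) u) ((g \<circ> h) v)"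
  proof (intro ballI)
    fix u v assume uv: "u \<in> V" "v \<in> V"
    show "E u v \<longleftrightarrow> E ((g \<circ> h) u) ((g \<circ> h) v)"
      using U_D(2)[OF h uv] U_D(2)[OF g U_in[OF h uv(1)] U_in[OF h uv(2)]] by simp
  qed
  moreover have "(g \<circ> h) ` VO = VO" using U_D(3)[OF g] U_D(3)[OF h] by (metis image_comp)
  moreover have "\<forall>v\<in>VO. local_action \<Omega> E c (g \<circ> h) v \<in> M"
  proof
    fix v assume v: "v \<in> VO"
    then have vV: "v \<in> V" and Sv: "S v = \<Omega>" using VOD unfolding S_def by auto
    have hv: "h v \<in> VO" using U_VO_iff[OF h vV] v by simp
    have m1: "local_action \<Omega> E c g (h v) \<in> M" using U_D(4)[OF g hv] .
    have m2: "local_action \<Omega> E c h v \<in> M" using U_D(4)[OF h v] .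
    have sg: "subgroup M (BijGroup \<Omega>)" using M unfolding perm_group_def .
    have "local_action \<Omega> E c g (h v) \<otimes>\<^bsub>BijGroup \<Omega>\<^esub> local_action \<Omega> E c h v \<in> M"
      using subgroup.m_closed[OF sg m1 m2] .
    moreover have "local_action \<Omega> E c g (h v) \<otimes>\<^bsub>BijGroup \<Omega>\<^esub> local_action \<Omega> E c h v
        = compose \<Omega> (local_action \<Omega> E c g (h v)) (local_action \<Omega> E c h v)"
      using Bij_mult subgroup.subset[OF sg] m1 m2 by (metis Bij_carrier subsetD)
    ultimately show "local_action \<Omega> E c (g \<circ> h) v \<in> M" using la_comp[OF g h vV] Sv by simp
  qed
  moreover have "\<forall>v\<in>VD. local_action \<Delta> E c (g \<circ> h) v \<in> N"
  proof
    fix v assume v: "v \<in> VD"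
    then have vV: "v \<in> V" and Sv: "S v = \<Delta>" using VOD unfolding S_def by auto
    have hv: "h v \<in> VD" using U_VD[OF h] v by blast
    have m1: "local_action \<Delta> E c g (h v) \<in> N" using U_D(5)[OF g hv] .
    have m2: "local_action \<Delta> E c h v \<in> N" using U_D(5)[OF h v] .
    have sg: "subgroup N (BijGroup \<Delta>)" using N unfolding perm_group_def .
    have "local_action \<Delta> E c g (h v) \<otimes>\<^bsub>BijGroup \<Delta>\<^esub> local_action \<Delta> E c h v \<in> N"
      using subgroup.m_closed[OF sg m1 m2] .
    moreover have "local_action \<Delta> E c g (h v) \<otimes>\<^bsub>BijGroup \<Delta>\<^esub> local_action \<Delta> E c h v
        = compose \<Delta> (local_action \<Delta> E c g (h v)) (local_action \<Delta> E c h v)"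
      using Bij_mult subgroup.subset[OF sg] m1 m2 by (metis Bij_carrier subsetD)
    ultimately show "local_action \<Delta> E c (g \<circ> h) v \<in> N" using la_comp[OF g h vV] Sv by simp
  qed
  ultimately show ?thesis unfolding U_group_def tree_aut_def by blast
qed

lemma U_agree:
  assumes two: "\<exists>a\<in>\<Omega>. \<exists>b\<in>\<Omega>. a \<noteq> b" "\<exists>a\<in>\<Delta>. \<exists>b\<in>\<Delta>. a \<noteq> b"
    and g: "g \<in> U_group \<Omega> \<Delta> M N V E VO VD c" and h: "h \<in> U_group \<Omega> \<Delta> M' N' V E VO VD c"
    and eq: "\<And>x. x \<in> VD \<Longrightarrow> g x = h x" and x: "x \<in> V"
  shows "g x = h x"
proof (cases "x \<in> VO")
  case False then show ?thesis using eq x VOD by auto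
next
  case True
  obtain u w where uw: "E x u" "E x w" "u \<noteq> w" using two_nb[OF two x] by blast
  have uD: "u \<in> VD" "w \<in> VD" using bip uw True VOD by blast+
  have guw: "g u \<noteq> g w" using U_D(1)[OF g] uw E_V unfolding bij_betw_def by (meson inj_onD)
  have e1: "E (g x) (g u)" "E (g x) (g w)" using U_E[OF g] uw by auto
  have e2: "E (h x) (g u)" "E (h x) (g w)" using U_E[OF h] uw eq uD by auto
  have "[g u, g x, g w] = path (g u) (g w)"
    by (rule path_unique) (use e1 guw E_sym E_V in auto)
  moreover have "[g u, h x, g w] = path (g u) (g w)"
    by (rule path_unique) (use e2 guw E_sym E_V in auto)
  ultimately have "[g u, g x, g w] = [g u, h x, g w]" by (rule trans[OF _ sym])
  then show ?thesis by simp
qed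

end


primrec trail :: "('v \<Rightarrow> 'c \<Rightarrow> 'v) \<Rightarrow> 'v \<Rightarrow> 'c list \<Rightarrow> 'v list" where
  "trail nbf x [] = [x]"
| "trail nbf x (a # w) = x # trail nbf (nbf x a) w"

fun cols :: "('v \<times> 'v \<Rightarrow> 'c) \<Rightarrow> 'v list \<Rightarrow> 'c list" where
  "cols c (x # y # zs) = c (x, y) # cols c (y # zs)"
| "cols c _ = []"

primrec tm :: "('c \<Rightarrow> 'c) \<Rightarrow> bool \<Rightarrow> 'c list \<Rightarrow> 'c list" where
  "tm m p [] = []"
| "tm m p (a # w) = (if p then m a else a) # tm m (\<not> p) w"

primrec goodw :: "'c set \<Rightarrow> 'c set \<Rightarrow> bool \<Rightarrow> 'c list \<Rightarrow> bool" where
  "goodw A B p [] = True"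
| "goodw A B p (a # w) = (a \<in> (if p then A else B) \<and> goodw A B (\<not> p) w)"

fun nbt :: "'c \<Rightarrow> 'c list \<Rightarrow> bool" where
  "nbt q (a # b # r) = (b \<noteq> q \<and> nbt a (b # r))"
| "nbt q _ = True"

lemma tm_length[simp]: "length (tm m p w) = length w"
  by (induction w arbitrary: p) auto

lemma tm_good: "m ` A \<subseteq> A \<Longrightarrow> goodw A B p w \<Longrightarrow> goodw A B p (tm m p w)"
  by (induction w arbitrary: p) auto

lemma tm_nbt:
  assumes "inj_on m A" "m ` A \<subseteq> A"
  shows "goodw A B p w \<Longrightarrow> q \<in> (if p then B else A) \<Longrightarrow> nbt (if p then q else m q) (tm m p w) = nbt q w"
proof (induction w arbitrary: p q rule: induct_list012)
  case (3 a b r)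
  have ab: "a \<in> (if p then A else B)" "b \<in> (if p then B else A)" using 3 by auto
  have IH: "nbt (if \<not> p then a else m a) (tm m (\<not> p) (b # r)) = nbt a (b # r)"
    using 3(2)[of "\<not> p" a] 3(3) ab by auto
  have eq: "((if \<not> p then m b else b) \<noteq> (if p then q else m q)) = (b \<noteq> q)"
    using ab 3(4) assms(1) by (cases p) (auto dest: inj_onD)
  show ?case using IH eq by (cases p) auto
qed auto

lemma tm_comp: "m2 ` A \<subseteq> A \<Longrightarrow> goodw A B p w \<Longrightarrow> tm (compose A m1 m2) p w = tm m1 p (tm m2 p w)"
  by (induction w arbitrary: p) (auto simp: compose_def)

lemma tm_id: "goodw A B p w \<Longrightarrow> tm (\<lambda>a\<in>A. a) p w = w"
  by (induction w arbitrary: p) auto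

lemma tm_append: "tm m p (w @ [a]) = tm m p w @ [if p = even (length w) then m a else a]"
  by (induction w arbitrary: p) auto

lemma goodw_append: "goodw A B p (w @ [a]) \<longleftrightarrow> goodw A B p w \<and> a \<in> (if p = even (length w) then A else B)"
  by (induction w arbitrary: p) auto

lemma trail_ne[simp]: "trail nbf x w \<noteq> []" by (cases w) auto
lemma trail_hd[simp]: "hd (trail nbf x w) = x" by (cases w) auto

lemma trail_append: "trail nbf x (w @ [a]) = trail nbf x w @ [nbf (last (trail nbf x w)) a]"
  by (induction w arbitrary: x) auto


lemma cols_append: "xs \<noteq> [] \<Longrightarrow> cols c (xs @ [y]) = cols c xs @ [c (last xs, y)]"
  by (induction xs rule: induct_list012) auto

lemma length_cols: "length (cols c xs) = length xs - 1"
  by (induction xs rule: induct_list012) auto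

locale lift = ltree \<Omega> \<Delta> V E VO VD c
  for \<Omega> \<Delta> :: "'c set" and V :: "'v set" and E and VO VD :: "'v set" and c :: "'v \<times> 'v \<Rightarrow> 'c" +
  fixes v0 :: 'v
  assumes v0: "v0 \<in> VO" and Omne: "\<Omega> \<noteq> {}"
begin

abbreviation "trl \<equiv> trail nb"
abbreviation "good \<equiv> goodw \<Omega> \<Delta>"

lemma S_VO: "x \<in> VO \<Longrightarrow> S x = \<Omega>" and S_VD: "x \<in> VD \<Longrightarrow> S x = \<Delta>"
  unfolding S_def using VOD by auto

lemma S_if: "x \<in> V \<Longrightarrow> S x = (if x \<in> VO then \<Omega> else \<Delta>)" unfolding S_def by simp

lemma v0V: "v0 \<in> V" using v0 VO_V by blast

lemma nb_V: "x \<in> V \<Longrightarrow> a \<in> S x \<Longrightarrow> nb x a \<in> V" using nb_prop E_V by blast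

lemma nb_VO: "x \<in> V \<Longrightarrow> a \<in> S x \<Longrightarrow> nb x a \<in> VO \<longleftrightarrow> x \<notin> VO"
  using nb_prop bip VOD by blast

lemma trail_walk:
  "x \<in> V \<Longrightarrow> good (x \<in> VO) w \<Longrightarrow> walk E (trl x w) \<and> last (trl x w) \<in> V
     \<and> (last (trl x w) \<in> VO \<longleftrightarrow> ((x \<in> VO) = even (length w)))"
proof (induction w arbitrary: x)
  case Nil then show ?case by simp
next
  case (Cons a w)
  have aS: "a \<in> S x" using Cons S_if by simp
  let ?y = "nb x a"
  have y: "E x ?y" "?y \<in> V" "?y \<in> VO \<longleftrightarrow> x \<notin> VO" using nb_prop[OF Cons(2) aS] nb_V[OF Cons(2) aS]
      nb_VO[OF Cons(2) aS] by auto
  have g: "good (?y \<in> VO) w" using Cons(3) y(3) by simp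
  have IH: "walk E (trl ?y w) \<and> last (trl ?y w) \<in> V \<and> (last (trl ?y w) \<in> VO \<longleftrightarrow> ((?y \<in> VO) = even (length w)))"
    using Cons(1)[OF y(2) g] .
  have "walk E (x # trl ?y w)"
    using IH y(1) by (cases w) auto
  then show ?case using IH y(3) by auto
qed

lemma trail_reduced:
  "x \<in> V \<Longrightarrow> good (x \<in> VO) w \<Longrightarrow> reduced (trl x w) \<longleftrightarrow> nbt (ic x) w"
proof (induction w arbitrary: x rule: induct_list012)
  case 1 then show ?case by simp
next
  case (2 a) then show ?case by simp
next
  case (3 a b r)
  have aS: "a \<in> S x" using 3 S_if by simp
  let ?y = "nb x a"
  have y: "E x ?y" "c (x, ?y) = a" "?y \<in> V" "?y \<in> VO \<longleftrightarrow> x \<notin> VO"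
    using nb_prop[OF 3(3) aS] nb_V[OF 3(3) aS] nb_VO[OF 3(3) aS] by auto
  have bS: "b \<in> S ?y" using 3(4) y(4) S_if[OF y(3)] by auto
  let ?z = "nb ?y b"
  have z: "E ?y ?z" "c (?y, ?z) = b" using nb_prop[OF y(3) bS] by auto
  have g: "good (?y \<in> VO) (b # r)" using 3(4) y(4) by simp
  have icy: "ic ?y = a" using ic_eq[OF y(1)] y(2) by simp
  have xz: "x \<noteq> ?z \<longleftrightarrow> b \<noteq> ic x"
  proof
    assume "x \<noteq> ?z" show "b \<noteq> ic x"
    proof
      assume "b = ic x"
      then have "c (?y, x) = b" using ic_eq[OF E_sym[OF y(1)]] by simp
      then have "?z = x" using nb_eq[OF E_sym[OF y(1)]] by simp
      then show False using \<open>x \<noteq> ?z\<close> by simp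
    qed
  next
    assume "b \<noteq> ic x" show "x \<noteq> ?z"
    proof
      assume "x = ?z"
      then have "c (?y, x) = b" using z by simp
      then show False using \<open>b \<noteq> ic x\<close> ic_eq[OF E_sym[OF y(1)]] by simp
    qed
  qed
  have "trl x (a # b # r) = x # ?y # trl ?z r" by simp
  moreover have "trl ?y (b # r) = ?y # trl ?z r" by simp
  moreover have "reduced (trl ?y (b # r)) \<longleftrightarrow> nbt a (b # r)" using 3(2)[OF y(3) g] icy by simp
  ultimately have "reduced (trl x (a # b # r)) \<longleftrightarrow> x \<noteq> ?z \<and> nbt a (b # r)"
    by (cases r) auto
  then show ?case using xz by simp
qed

lemma cols_trail: "x \<in> V \<Longrightarrow> good (x \<in> VO) w \<Longrightarrow> cols c (trl x w) = w"
proof (induction w arbitrary: x)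
  case (Cons a w)
  have aS: "a \<in> S x" using Cons S_if by simp
  let ?y = "nb x a"
  have y: "c (x, ?y) = a" "?y \<in> V" "?y \<in> VO \<longleftrightarrow> x \<notin> VO"
    using nb_prop[OF Cons(2) aS] nb_V[OF Cons(2) aS] nb_VO[OF Cons(2) aS] by auto
  have "cols c (trl ?y w) = w" using Cons(1)[OF y(2)] Cons(3) y(3) by simp
  moreover have "trl ?y w = ?y # tl (trl ?y w)" by (cases w) auto
  ultimately show ?case using y(1) by (metis cols.simps(1) trail.simps(2))
qed simp

lemma trail_cols: "walk E xs \<Longrightarrow> trl (hd xs) (cols c xs) = xs"
proof (induction xs rule: induct_list012)
  case (3 x y zs)
  then have "E x y" "trl y (cols c (y # zs)) = y # zs" by auto
  then show ?case using nb_eq by simp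
qed auto

lemma good_cols: "walk E xs \<Longrightarrow> hd xs \<in> V \<Longrightarrow> good (hd xs \<in> VO) (cols c xs)"
proof (induction xs rule: induct_list012)
  case (3 x y zs)
  then have e: "E x y" and w: "walk E (y # zs)" by auto
  have "c (x, y) \<in> S x" using c_out[OF e] .
  moreover have "y \<in> V" "y \<in> VO \<longleftrightarrow> x \<notin> VO" using E_V e bip VOD by blast+
  moreover have "good (y \<in> VO) (cols c (y # zs))" using 3(2) w \<open>y \<in> V\<close> by simp
  ultimately show ?case using S_if 3(4) by auto
qed auto

lemma nbt_cols: "walk E xs \<Longrightarrow> reduced xs \<Longrightarrow> hd xs \<in> V \<Longrightarrow> nbt (ic (hd xs)) (cols c xs)"
  using trail_reduced[OF _ good_cols] trail_cols by metis

end


lemma last_cols: "walk E xs \<Longrightarrow> 2 \<le> length xs \<Longrightarrow> (\<And>y z. E y z \<Longrightarrow> c (y, z) = ic z) \<Longrightarrow> last (cols c xs) = ic (last xs)"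
proof (induction xs rule: induct_list012)
  case (3 x y zs)
  show ?case
  proof (cases zs)
    case Nil then show ?thesis using 3 by simp
  next
    case (Cons w ws)
    then have "last (cols c (y # zs)) = ic (last (y # zs))" using 3 by simp
    then show ?thesis using Cons by simp
  qed
qed auto

context lift begin

definition cw :: "'v \<Rightarrow> 'c list" where "cw x = cols c (path v0 x)"
definition tr :: "'c list \<Rightarrow> 'v" where "tr w = last (trl v0 w)"
definition R :: "'c list set" where "R = {w. good True w \<and> nbt (ic v0) w}"
definition gm :: "('c \<Rightarrow> 'c) \<Rightarrow> 'v \<Rightarrow> 'v" where "gm m x = tr (tm m True (cw x))"

lemma icv0: "ic v0 \<in> \<Delta>"
proof -
  obtain a where a: "a \<in> \<Omega>" using Omne by blast
  then have aS: "a \<in> S v0" using S_VO v0 by simp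
  let ?y = "nb v0 a"
  have e: "E v0 ?y" using nb_prop[OF v0V aS] by simp
  have "?y \<in> VD" using bip e v0 VOD by blast
  then have "c (?y, v0) \<in> \<Delta>" using c_out[OF E_sym[OF e]] S_VD by simp
  then show ?thesis using ic_eq[OF E_sym[OF e]] by simp
qed

lemma cw_R: "x \<in> V \<Longrightarrow> cw x \<in> R"
  unfolding cw_def R_def using good_cols[OF path_walk[OF v0V] ] nbt_cols[OF path_walk[OF v0V] path_reduced[OF v0V]]
    path_hd[OF v0V] v0 v0V by auto

lemma tr_cw: assumes x: "x \<in> V" shows "tr (cw x) = x"
proof -
  have "trl v0 (cols c (path v0 x)) = path v0 x"
    using trail_cols[OF path_walk[OF v0V x]] path_hd[OF v0V x] by simp
  then show ?thesis unfolding tr_def cw_def using path_last[OF v0V x] by simp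
qed

lemma trail_R: assumes "w \<in> R"
  shows "walk E (trl v0 w)" "reduced (trl v0 w)" "tr w \<in> V" "tr w \<in> VO \<longleftrightarrow> even (length w)"
proof -
  have g: "good (v0 \<in> VO) w" "nbt (ic v0) w" using assms v0 unfolding R_def by auto
  show "walk E (trl v0 w)" "tr w \<in> V" "tr w \<in> VO \<longleftrightarrow> even (length w)"
    using trail_walk[OF v0V g(1)] v0 unfolding tr_def by auto
  show "reduced (trl v0 w)" using trail_reduced[OF v0V g(1)] g(2) by simp
qed

lemma cw_tr: assumes "w \<in> R" shows "cw (tr w) = w"
proof -
  have "trl v0 w = path v0 (tr w)"
    using path_unique[OF v0V trail_R(3)[OF assms] trail_R(1,2)[OF assms]] unfolding tr_def by simp
  moreover have "cols c (trl v0 w) = w" using cols_trail[OF v0V, of w] assms v0 unfolding R_def by simp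
  ultimately show ?thesis unfolding cw_def by simp
qed

lemma VO_cw: assumes x: "x \<in> V" shows "x \<in> VO \<longleftrightarrow> even (length (cw x))"
  using trail_R(4)[OF cw_R[OF x]] tr_cw[OF x] by simp

lemma Bij_props: "m \<in> Bij \<Omega> \<Longrightarrow> inj_on m \<Omega> \<and> m ` \<Omega> \<subseteq> \<Omega>"
  using Bij_bij[of m \<Omega>] unfolding bij_betw_def by auto

lemma tmR: assumes "m \<in> Bij \<Omega>" "w \<in> R" shows "tm m True w \<in> R"
proof -
  have g: "good True w" "nbt (ic v0) w" using assms unfolding R_def by auto
  have "good True (tm m True w)" using tm_good Bij_props[OF assms(1)] g by blast
  moreover have "nbt (ic v0) (tm m True w)"
    using tm_nbt[of m \<Omega> \<Delta> True w "ic v0"] Bij_props[OF assms(1)] g icv0 by simp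
  ultimately show ?thesis unfolding R_def by simp
qed

lemma gm_V: "m \<in> Bij \<Omega> \<Longrightarrow> x \<in> V \<Longrightarrow> gm m x \<in> V"
  unfolding gm_def using trail_R(3)[OF tmR[OF _ cw_R]] by blast

lemma gm_VO: "m \<in> Bij \<Omega> \<Longrightarrow> x \<in> V \<Longrightarrow> gm m x \<in> VO \<longleftrightarrow> x \<in> VO"
  unfolding gm_def using trail_R(4)[OF tmR[OF _ cw_R]] VO_cw by simp

lemma gm_mult: assumes "m1 \<in> Bij \<Omega>" "m2 \<in> Bij \<Omega>" "x \<in> V"
  shows "gm (compose \<Omega> m1 m2) x = gm m1 (gm m2 x)"
proof -
  have "gm m1 (gm m2 x) = tr (tm m1 True (tm m2 True (cw x)))"
    unfolding gm_def using cw_tr[OF tmR[OF assms(2) cw_R[OF assms(3)]]] by simp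
  also have "\<dots> = gm (compose \<Omega> m1 m2) x" unfolding gm_def
    using tm_comp[of m2 \<Omega> \<Delta> True "cw x" m1] Bij_props[OF assms(2)] cw_R[OF assms(3)] unfolding R_def by simp
  finally show ?thesis by simp
qed

lemma gm_id: assumes x: "x \<in> V" shows "gm (\<lambda>a\<in>\<Omega>. a) x = x"
  unfolding gm_def using tm_id[of \<Omega> \<Delta> True "cw x"] cw_R[OF x] tr_cw[OF x] unfolding R_def by simp

lemma gm_inv: assumes "m \<in> Bij \<Omega>" "x \<in> V"
  shows "inv\<^bsub>BijGroup \<Omega>\<^esub> m \<in> Bij \<Omega>" "gm m (gm (inv\<^bsub>BijGroup \<Omega>\<^esub> m) x) = x" "gm (inv\<^bsub>BijGroup \<Omega>\<^esub> m) (gm m x) = x"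
proof -
  interpret B: group "BijGroup \<Omega>" by (rule group_BijGroup)
  have mc: "m \<in> carrier (BijGroup \<Omega>)" using assms by simp
  show ib: "inv\<^bsub>BijGroup \<Omega>\<^esub> m \<in> Bij \<Omega>" using B.inv_closed[OF mc] by simp
  have "compose \<Omega> m (inv\<^bsub>BijGroup \<Omega>\<^esub> m) = (\<lambda>a\<in>\<Omega>. a)"
    using B.r_inv[OF mc] Bij_mult[OF assms(1) ib] by simp
  then show "gm m (gm (inv\<^bsub>BijGroup \<Omega>\<^esub> m) x) = x" using gm_mult[OF assms(1) ib assms(2)] gm_id[OF assms(2)] by simp
  have "compose \<Omega> (inv\<^bsub>BijGroup \<Omega>\<^esub> m) m = (\<lambda>a\<in>\<Omega>. a)"
    using B.l_inv[OF mc] Bij_mult[OF ib assms(1)] by simp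
  then show "gm (inv\<^bsub>BijGroup \<Omega>\<^esub> m) (gm m x) = x" using gm_mult[OF ib assms(1) assms(2)] gm_id[OF assms(2)] by simp
qed

lemma gm_bij: assumes "m \<in> Bij \<Omega>" shows "bij_betw (gm m) V V"
  by (rule bij_betw_byWitness[of V "gm (inv\<^bsub>BijGroup \<Omega>\<^esub> m)"])
     (use gm_inv[OF assms] gm_V[OF assms] gm_V[OF gm_inv(1)[OF assms]] v0V in auto)

lemma gm_child: assumes "m \<in> Bij \<Omega>" "x \<in> V" "E x u" "path v0 u = path v0 x @ [u]"
  shows "gm m u = nb (gm m x) (if x \<in> VO then m (c (x, u)) else c (x, u))"
    "(if x \<in> VO then m (c (x, u)) else c (x, u)) \<in> S (gm m x)"
proof -
  let ?a = "c (x, u)"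
  let ?a' = "if x \<in> VO then m ?a else ?a"
  have "cw u = cw x @ [?a]" unfolding cw_def assms(4) using cols_append[OF path_ne[OF v0V assms(2)], of c u]
      path_last[OF v0V assms(2)] by simp
  then have "tm m True (cw u) = tm m True (cw x) @ [?a']" using VO_cw[OF assms(2)] by (simp add: tm_append)
  then show "gm m u = nb (gm m x) ?a'" unfolding gm_def tr_def by (simp add: trail_append)
  have "?a \<in> S x" using c_out[OF assms(3)] .
  then have "?a' \<in> S x" using Bij_props[OF assms(1)] S_if[OF assms(2)] by auto
  then show "?a' \<in> S (gm m x)" using gm_VO[OF assms(1,2)] S_if[OF assms(2)] S_if[OF gm_V[OF assms(1,2)]] by simp
qed

lemma gm_adj: assumes "m \<in> Bij \<Omega>" "E x y" shows "E (gm m x) (gm m y)"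
proof -
  have xy: "x \<in> V" "y \<in> V" using E_V assms(2) by auto
  from adj_path[OF v0V assms(2)] show ?thesis
  proof
    assume h: "path v0 y = path v0 x @ [y]"
    show ?thesis using gm_child[OF assms(1) xy(1) assms(2) h] nb_prop(1)[OF gm_V[OF assms(1) xy(1)]] by simp
  next
    assume h: "path v0 x = path v0 y @ [x]"
    have "E (gm m y) (gm m x)" using gm_child[OF assms(1) xy(2) E_sym[OF assms(2)] h] nb_prop(1)[OF gm_V[OF assms(1) xy(2)]] by simp
    then show ?thesis using E_sym by blast
  qed
qed

lemma ic_cw: assumes "x \<in> V" "cw x \<noteq> []" shows "ic x = last (cw x)"
proof -
  have "length (cols c (path v0 x)) \<noteq> 0" using assms(2) unfolding cw_def by simp
  then have "length (path v0 x) - 1 \<noteq> 0" using length_cols[of c "path v0 x"] by simp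
  then have l2: "2 \<le> length (path v0 x)" by linarith
  have "last (cols c (path v0 x)) = ic (last (path v0 x))"
    by (rule last_cols[OF path_walk[OF v0V assms(1)] l2]) (rule ic_eq)
  then show ?thesis unfolding cw_def using path_last[OF v0V assms(1)] by simp
qed

lemma gm_v0: "gm m v0 = v0"
proof -
  have "path v0 v0 = [v0]" using path_self v0V by simp
  then show ?thesis unfolding gm_def cw_def tr_def by simp
qed

lemma gm_la: assumes m: "m \<in> Bij \<Omega>" and x: "x \<in> V" and a: "a \<in> S x"
  shows "c (gm m x, gm m (nb x a)) = (if x \<in> VO then m a else a)"
proof -
  let ?u = "nb x a"
  have e: "E x ?u" "c (x, ?u) = a" using nb_prop[OF x a] by auto
  have uV: "?u \<in> V" using E_V e by blast
  from adj_path[OF v0V e(1)] show ?thesis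
  proof
    assume "path v0 ?u = path v0 x @ [?u]"
    then show ?thesis using gm_child[OF m x e(1)] nb_prop[OF gm_V[OF m x]] e(2) by simp
  next
    assume ch: "path v0 x = path v0 ?u @ [x]"
    have e2: "E (gm m x) (gm m ?u)" using gm_adj[OF m e(1)] .
    have lhs: "c (gm m x, gm m ?u) = ic (gm m ?u)" using ic_eq[OF e2] .
    have aic: "a = ic ?u" using ic_eq[OF e(1)] e(2) by simp
    have cwx: "cw x = cw ?u @ [c (?u, x)]" unfolding cw_def ch using cols_append[OF path_ne[OF v0V uV], of c x]
      path_last[OF v0V uV] by simp
    show ?thesis
    proof (cases "cw ?u = []")
      case True
      then have "?u = v0" using tr_cw[OF uV] unfolding tr_def by simp
      moreover have "x \<notin> VO" using e(1) bip v0 VOD calculation by blast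
      ultimately show ?thesis using lhs aic gm_v0 by simp
    next
      case False
      then obtain w' d where wd: "cw ?u = w' @ [d]" by (metis rev_exhaust)
      have icu: "ic ?u = d" using ic_cw[OF uV False] wd by simp
      have gu: "gm m ?u \<in> V" using gm_V[OF m uV] .
      have cwg: "cw (gm m ?u) = tm m True (cw ?u)" unfolding gm_def using cw_tr[OF tmR[OF m cw_R[OF uV]]] .
      have "cw (gm m ?u) \<noteq> []" using cwg False by (metis length_0_conv tm_length)
      then have "ic (gm m ?u) = last (tm m True (cw ?u))" using ic_cw[OF gu] cwg by simp
      also have "\<dots> = (if even (length w') then m d else d)" using wd by (simp add: tm_append)
      finally have "ic (gm m ?u) = (if even (length w') then m d else d)" .
      moreover have "x \<in> VO \<longleftrightarrow> even (length w')" using VO_cw[OF x] cwx wd by simp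
      ultimately show ?thesis using lhs aic icu by simp
    qed
  qed
qed

end


context lift begin

lemma gm_aut: assumes m: "m \<in> Bij \<Omega>" shows "gm m \<in> tree_aut V E"
proof -
  have "\<forall>u\<in>V. \<forall>v\<in>V. E u v \<longleftrightarrow> E (gm m u) (gm m v)"
  proof (intro ballI iffI)
    fix u v assume "u \<in> V" "v \<in> V" "E u v" then show "E (gm m u) (gm m v)" using gm_adj[OF m] by blast
  next
    fix u v assume uv: "u \<in> V" "v \<in> V" "E (gm m u) (gm m v)"
    have "E (gm (inv\<^bsub>BijGroup \<Omega>\<^esub> m) (gm m u)) (gm (inv\<^bsub>BijGroup \<Omega>\<^esub> m) (gm m v))"
      using gm_adj[OF gm_inv(1)[OF m uv(1)] uv(3)] .
    then show "E u v" using gm_inv(3)[OF m] uv by simp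
  qed
  then show ?thesis unfolding tree_aut_def using gm_bij[OF m] by simp
qed

lemma gm_imVO: assumes m: "m \<in> Bij \<Omega>" shows "gm m ` VO = VO"
proof
  show "gm m ` VO \<subseteq> VO" using gm_VO[OF m] VO_V by blast
next
  show "VO \<subseteq> gm m ` VO"
  proof
    fix x assume x: "x \<in> VO"
    have xV: "x \<in> V" using VO_V x .
    let ?y = "gm (inv\<^bsub>BijGroup \<Omega>\<^esub> m) x"
    have "?y \<in> VO" using gm_VO[OF gm_inv(1)[OF m xV] xV] x by simp
    moreover have "gm m ?y = x" using gm_inv(2)[OF m xV] .
    ultimately show "x \<in> gm m ` VO" by (metis image_eqI)
  qed
qed

lemma gm_local: assumes m: "m \<in> Bij \<Omega>" and x: "x \<in> V"
  shows "local_action (S x) E c (gm m) x = (if x \<in> VO then m else (\<lambda>a\<in>\<Delta>. a))"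
proof (rule ext)
  fix a
  show "local_action (S x) E c (gm m) x a = (if x \<in> VO then m else (\<lambda>a\<in>\<Delta>. a)) a"
  proof (cases "a \<in> S x")
    case True
    then show ?thesis using local_action_eq[OF True] gm_la[OF m x True] S_if[OF x] by auto
  next
    case False
    have "m \<in> extensional \<Omega>" using m by (simp add: Bij_def)
    then show ?thesis using False S_if[OF x] unfolding local_action_def by (auto simp: extensional_def)
  qed
qed

lemma gm_U:
  assumes M: "perm_group \<Omega> M" and N: "perm_group \<Delta> N" and m: "m \<in> M"
  shows "gm m \<in> U_group \<Omega> \<Delta> M N V E VO VD c"
proof -
  have sM: "subgroup M (BijGroup \<Omega>)" and sN: "subgroup N (BijGroup \<Delta>)"
    using M N unfolding perm_group_def by auto
  have mB: "m \<in> Bij \<Omega>" using subgroup.subset[OF sM] m by auto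
  have "\<forall>v\<in>VO. local_action \<Omega> E c (gm m) v \<in> M"
  proof
    fix v assume v: "v \<in> VO"
    then show "local_action \<Omega> E c (gm m) v \<in> M" using gm_local[OF mB VO_V[OF v]] S_VO[OF v] m by simp
  qed
  moreover have "\<forall>v\<in>VD. local_action \<Delta> E c (gm m) v \<in> N"
  proof
    fix v assume v: "v \<in> VD"
    have "v \<notin> VO" using v VOD by auto
    moreover have "(\<lambda>a\<in>\<Delta>. a) \<in> N" using subgroup.one_closed[OF sN] by simp
    ultimately show "local_action \<Delta> E c (gm m) v \<in> N" using gm_local[OF mB VD_V[OF v]] S_VD[OF v] by simp
  qed
  ultimately show ?thesis unfolding U_group_def using gm_aut[OF mB] gm_imVO[OF mB] by simp
qed

lemma restrict_U_Bij:
  assumes "g \<in> U_group \<Omega> \<Delta> M N V E VO VD c" shows "restrict g VD \<in> Bij VD"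
proof -
  have "inj_on g VD" using U_D(1)[OF assms] VOD unfolding bij_betw_def by (meson inj_on_subset sup.cobounded2)
  then have "bij_betw g VD VD" using U_VD[OF assms] unfolding bij_betw_def by simp
  then show ?thesis unfolding Bij_def by (simp add: bij_betw_restrict_eq)
qed

lemma psi_mult:
  assumes M: "perm_group \<Omega> M" and N: "perm_group \<Delta> N" and m1: "m1 \<in> M" and m2: "m2 \<in> M"
  shows "restrict (gm (m1 \<otimes>\<^bsub>pgrp \<Omega> M\<^esub> m2)) VD
     = restrict (gm m1) VD \<otimes>\<^bsub>box_product \<Omega> \<Delta> M N V E VO VD c\<^esub> restrict (gm m2) VD"
proof -
  have sM: "subgroup M (BijGroup \<Omega>)" using M unfolding perm_group_def by auto
  have mB: "m1 \<in> Bij \<Omega>" "m2 \<in> Bij \<Omega>" using subgroup.subset[OF sM] m1 m2 by auto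
  have "m1 \<otimes>\<^bsub>pgrp \<Omega> M\<^esub> m2 = compose \<Omega> m1 m2" unfolding pgrp_def using Bij_mult[OF mB] by simp
  moreover have "restrict (gm m1) VD \<otimes>\<^bsub>box_product \<Omega> \<Delta> M N V E VO VD c\<^esub> restrict (gm m2) VD
      = compose VD (restrict (gm m1) VD) (restrict (gm m2) VD)"
    unfolding box_product_def using Bij_mult[OF restrict_U_Bij[OF gm_U[OF M N m1]] restrict_U_Bij[OF gm_U[OF M N m2]]] by simp
  moreover have "compose VD (restrict (gm m1) VD) (restrict (gm m2) VD) = restrict (gm (compose \<Omega> m1 m2)) VD"
  proof (rule ext)
    fix x show "compose VD (restrict (gm m1) VD) (restrict (gm m2) VD) x = restrict (gm (compose \<Omega> m1 m2)) VD x"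
    proof (cases "x \<in> VD")
      case True
      have "gm m2 x \<in> VD" using U_VD[OF gm_U[OF M N m2]] True by blast
      then show ?thesis using True gm_mult[OF mB VD_V[OF True]] by (simp add: compose_def)
    qed (simp add: compose_def)
  qed
  ultimately show ?thesis by simp
qed

lemma psi_carrier:
  assumes M: "perm_group \<Omega> M" and N: "perm_group \<Delta> N" and m: "m \<in> M"
  shows "restrict (gm m) VD \<in> carrier (box_product \<Omega> \<Delta> M N V E VO VD c)"
  unfolding box_product_def box_product_set_def using gm_U[OF M N m] by simp

lemma psi_nontriv:
  assumes M: "nontrivial_perm_group \<Omega> M" and N: "perm_group \<Delta> N"
  shows "\<exists>m\<in>M. restrict (gm m) VD \<noteq> restrict (gm (\<lambda>a\<in>\<Omega>. a)) VD"
proof -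
  have sM: "subgroup M (BijGroup \<Omega>)" using M unfolding nontrivial_perm_group_def perm_group_def by auto
  have "(\<lambda>a\<in>\<Omega>. a) \<in> M" using subgroup.one_closed[OF sM] by simp
  then obtain m where m: "m \<in> M" "m \<noteq> (\<lambda>a\<in>\<Omega>. a)" using M unfolding nontrivial_perm_group_def by auto
  have mB: "m \<in> Bij \<Omega>" using subgroup.subset[OF sM] m by auto
  have "\<exists>a\<in>\<Omega>. m a \<noteq> a"
  proof (rule ccontr)
    assume "\<not> ?thesis"
    then have "m = (\<lambda>a\<in>\<Omega>. a)" using mB unfolding Bij_def by (auto simp: extensional_def)
    then show False using m by simp
  qed
  then obtain a where a: "a \<in> \<Omega>" "m a \<noteq> a" by blast
  have aS: "a \<in> S v0" using S_VO[OF v0] a by simp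
  let ?u = "nb v0 a"
  have e: "E v0 ?u" "c (v0, ?u) = a" using nb_prop[OF v0V aS] by auto
  have uD: "?u \<in> VD" using bip e v0 VOD by blast
  have "c (v0, gm m ?u) = m a" using gm_la[OF mB v0V aS] gm_v0 v0 by simp
  then have "gm m ?u \<noteq> ?u" using e a by auto
  moreover have "gm (\<lambda>a\<in>\<Omega>. a) ?u = ?u" using gm_id VD_V[OF uD] by simp
  ultimately have "restrict (gm m) VD ?u \<noteq> restrict (gm (\<lambda>a\<in>\<Omega>. a)) VD ?u" using uD by simp
  then show ?thesis using m by metis
qed

end


lemma pgrp_group: "perm_group T L \<Longrightarrow> group (pgrp T L)"
  unfolding perm_group_def pgrp_def using subgroup.subgroup_is_group group_BijGroup by blast

lemma final_step:
  fixes G :: "('g, 'b) monoid_scheme"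
  assumes G: "group G" and L: "perm_group T L" and h: "h \<in> hom G (pgrp T L)"
    and nt: "\<exists>m\<in>carrier G. h m \<noteq> (\<lambda>a\<in>T. a)"
  shows "\<exists>K H. K \<lhd> G \<and> K \<noteq> carrier G \<and> subgroup H (pgrp T L) \<and> G Mod K \<cong> pgrp T H"
proof -
  have gL: "group (pgrp T L)" using pgrp_group[OF L] .
  interpret gh: group_hom G "pgrp T L" h using G gL h unfolding group_hom_def group_hom_axioms_def by simp
  let ?K = "kernel G (pgrp T L) h"
  let ?H = "h ` carrier G"
  have one: "\<one>\<^bsub>pgrp T L\<^esub> = (\<lambda>a\<in>T. a)" unfolding pgrp_def by simp
  have "?K \<lhd> G" using gh.normal_kernel .
  moreover have "?K \<noteq> carrier G" using nt one unfolding kernel_def by auto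
  moreover have sH: "subgroup ?H (pgrp T L)" using gh.img_is_subgroup .
  moreover have "G Mod ?K \<cong> pgrp T ?H"
  proof -
    have gH: "group ((pgrp T L)\<lparr>carrier := ?H\<rparr>)" using subgroup.subgroup_is_group[OF sH gL] .
    have hom2: "h \<in> hom G ((pgrp T L)\<lparr>carrier := ?H\<rparr>)"
      using h unfolding hom_def by auto
    interpret gh2: group_hom G "(pgrp T L)\<lparr>carrier := ?H\<rparr>" h
      using G gH hom2 unfolding group_hom_def group_hom_axioms_def by simp
    have "G Mod kernel G ((pgrp T L)\<lparr>carrier := ?H\<rparr>) h \<cong> (pgrp T L)\<lparr>carrier := ?H\<rparr>"
      by (rule gh2.FactGroup_iso) simp
    moreover have "kernel G ((pgrp T L)\<lparr>carrier := ?H\<rparr>) h = ?K" unfolding kernel_def by simp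
    moreover have "(pgrp T L)\<lparr>carrier := ?H\<rparr> = pgrp T ?H" unfolding pgrp_def by simp
    ultimately show ?thesis by simp
  qed
  ultimately show ?thesis by blast
qed

lemma walk_exit:
  "walk E xs \<Longrightarrow> hd xs \<in> F \<Longrightarrow> last xs \<notin> F \<Longrightarrow> \<exists>u w. u \<in> F \<and> w \<notin> F \<and> E u w"
proof (induction xs rule: induct_list012)
  case (3 x y zs)
  show ?case
  proof (cases "y \<in> F")
    case True then show ?thesis using 3 by auto
  next
    case False then show ?thesis using 3 by auto
  qed
qed auto

lemma (in ltree) restrict_U_Bij2:
  assumes "g \<in> U_group \<Omega> \<Delta> M N V E VO VD c" shows "restrict g VD \<in> Bij VD"
proof -
  have "inj_on g VD" using U_D(1)[OF assms] VOD unfolding bij_betw_def by (meson inj_on_subset sup.cobounded2)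
  then have "bij_betw g VD VD" using U_VD[OF assms] unfolding bij_betw_def by simp
  then show ?thesis unfolding Bij_def by (simp add: bij_betw_restrict_eq)
qed

theorem lemma7p3:
  fixes \<Omega>1 \<Delta>1 :: "'c1 set" and M1 N1 :: "('c1 \<Rightarrow> 'c1) set"
    and \<Omega>2 \<Delta>2 :: "'c2 set" and M2 N2 :: "('c2 \<Rightarrow> 'c2) set"
    and V1 VO1 VD1 :: "'v1 set" and E1 :: "'v1 \<Rightarrow> 'v1 \<Rightarrow> bool" and c1 :: "'v1 \<times> 'v1 \<Rightarrow> 'c1"
    and V2 VO2 VD2 :: "'v2 set" and E2 :: "'v2 \<Rightarrow> 'v2 \<Rightarrow> bool" and c2 :: "'v2 \<times> 'v2 \<Rightarrow> 'c2"
  assumes "box_data \<Omega>1 \<Delta>1 M1 N1"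
    and "box_data \<Omega>2 \<Delta>2 M2 N2"
    and "legal_coloured_biregular_tree \<Omega>1 \<Delta>1 V1 E1 VO1 VD1 c1"
    and "legal_coloured_biregular_tree \<Omega>2 \<Delta>2 V2 E2 VO2 VD2 c2"
    and "property_FA (pgrp \<Omega>1 M1)"
    and "\<And>K H. K \<lhd> pgrp \<Omega>1 M1 \<Longrightarrow> K \<noteq> M1 \<Longrightarrow> subgroup H (pgrp \<Omega>2 M2)
           \<Longrightarrow> \<not> (pgrp \<Omega>1 M1 Mod K \<cong> pgrp \<Omega>2 H)"
    and "\<And>K H. K \<lhd> pgrp \<Omega>1 M1 \<Longrightarrow> K \<noteq> M1 \<Longrightarrow> subgroup H (pgrp \<Delta>2 N2)
           \<Longrightarrow> \<not> (pgrp \<Omega>1 M1 Mod K \<cong> pgrp \<Delta>2 H)"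
  shows "\<not> (box_product \<Omega>1 \<Delta>1 M1 N1 V1 E1 VO1 VD1 c1 \<cong> box_product \<Omega>2 \<Delta>2 M2 N2 V2 E2 VO2 VD2 c2)"
proof
  assume iso: "box_product \<Omega>1 \<Delta>1 M1 N1 V1 E1 VO1 VD1 c1 \<cong> box_product \<Omega>2 \<Delta>2 M2 N2 V2 E2 VO2 VD2 c2"
  let ?B1 = "box_product \<Omega>1 \<Delta>1 M1 N1 V1 E1 VO1 VD1 c1"
  let ?B2 = "box_product \<Omega>2 \<Delta>2 M2 N2 V2 E2 VO2 VD2 c2"
  let ?U2 = "U_group \<Omega>2 \<Delta>2 M2 N2 V2 E2 VO2 VD2 c2"
  let ?G = "pgrp \<Omega>1 M1"
  obtain \<phi> where \<phi>: "\<phi> \<in> iso ?B1 ?B2" using iso unfolding is_iso_def by blast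
  have \<phi>hom: "\<phi> \<in> hom ?B1 ?B2" and \<phi>bij: "bij_betw \<phi> (carrier ?B1) (carrier ?B2)"
    using \<phi> unfolding iso_def by auto
  have two1: "\<exists>a\<in>\<Omega>1. \<exists>b\<in>\<Omega>1. a \<noteq> b" "\<exists>a\<in>\<Delta>1. \<exists>b\<in>\<Delta>1. a \<noteq> b"
    and M1nt: "nontrivial_perm_group \<Omega>1 M1" and N1: "perm_group \<Delta>1 N1"
    using assms(1) unfolding box_data_def nontrivial_perm_group_def by auto
  have M1: "perm_group \<Omega>1 M1" using M1nt unfolding nontrivial_perm_group_def by simp
  have two2: "\<exists>a\<in>\<Omega>2. \<exists>b\<in>\<Omega>2. a \<noteq> b" "\<exists>a\<in>\<Delta>2. \<exists>b\<in>\<Delta>2. a \<noteq> b"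
    and M2: "perm_group \<Omega>2 M2" and N2: "perm_group \<Delta>2 N2"
    using assms(2) unfolding box_data_def nontrivial_perm_group_def by auto
  interpret L1: ltree \<Omega>1 \<Delta>1 V1 E1 VO1 VD1 c1
    using assms(3) unfolding ltree_def ltree_axioms_def tree_def legal_coloured_biregular_tree_def by blast
  interpret L2: ltree \<Omega>2 \<Delta>2 V2 E2 VO2 VD2 c2
    using assms(4) unfolding ltree_def ltree_axioms_def tree_def legal_coloured_biregular_tree_def by blast
  have Om1: "\<Omega>1 \<noteq> {}" using two1 by blast
  obtain v0 where v0: "v0 \<in> VO1"
  proof -
    obtain x where x: "x \<in> V1" using L1.V_ne by blast
    show ?thesis
    proof (cases "x \<in> VO1")
      case True then show ?thesis using that by blast
    next
      case False
      obtain a where a: "a \<in> \<Delta>1" using two1 by blast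
      then have aS: "a \<in> L1.S x" unfolding L1.S_def using False by simp
      have "L1.nb x a \<in> VO1"
        using L1.nb_prop(1)[OF x aS] L1.bip False L1.VOD x by blast
      then show ?thesis using that by blast
    qed
  qed
  interpret F1: lift \<Omega>1 \<Delta>1 V1 E1 VO1 VD1 c1 v0
    using v0 Om1 by unfold_locales auto
  have grpG: "group ?G" using pgrp_group[OF M1] .
  interpret G: group ?G using grpG .
  have carG: "carrier ?G = M1" unfolding pgrp_def by simp
  have oneG: "\<one>\<^bsub>?G\<^esub> = (\<lambda>a\<in>\<Omega>1. a)" unfolding pgrp_def by simp
  define \<psi> where "\<psi> = (\<lambda>m. restrict (F1.gm m) VD1)"
  have \<psi>C: "\<And>m. m \<in> M1 \<Longrightarrow> \<psi> m \<in> carrier ?B1" unfolding \<psi>_def using F1.psi_carrier[OF M1 N1] by blast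
  have \<psi>mult: "\<And>m1 m2. m1 \<in> M1 \<Longrightarrow> m2 \<in> M1 \<Longrightarrow> \<psi> (m1 \<otimes>\<^bsub>?G\<^esub> m2) = \<psi> m1 \<otimes>\<^bsub>?B1\<^esub> \<psi> m2"
    unfolding \<psi>_def using F1.psi_mult[OF M1 N1] by blast
  define b where "b = (\<lambda>m. \<phi> (\<psi> m))"
  have bC: "\<And>m. m \<in> M1 \<Longrightarrow> b m \<in> carrier ?B2" unfolding b_def using hom_in_carrier[OF \<phi>hom \<psi>C] .
  have carB2: "carrier ?B2 = (\<lambda>g. restrict g VD2) ` ?U2"
    by (simp add: box_product_def box_product_set_def)
  define A where "A = (\<lambda>m. SOME g. g \<in> ?U2 \<and> restrict g VD2 = b m)"
  have AU: "\<And>m. m \<in> M1 \<Longrightarrow> A m \<in> ?U2 \<and> restrict (A m) VD2 = b m"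
  proof -
    fix m assume m: "m \<in> M1"
    have "\<exists>g. g \<in> ?U2 \<and> restrict g VD2 = b m" using bC[OF m] carB2 by auto
    then show "A m \<in> ?U2 \<and> restrict (A m) VD2 = b m" unfolding A_def by (rule someI_ex)
  qed
  have AU1: "\<And>m. m \<in> M1 \<Longrightarrow> A m \<in> ?U2" using AU by blast
  have Aval: "\<And>m x. m \<in> M1 \<Longrightarrow> x \<in> VD2 \<Longrightarrow> A m x = b m x"
  proof -
    fix m x assume "m \<in> M1" "x \<in> VD2"
    then show "A m x = b m x" using AU[of m] by (metis restrict_apply')
  qed
  have bB: "\<And>m. m \<in> M1 \<Longrightarrow> b m \<in> Bij VD2" using AU L2.restrict_U_Bij2 by metis
  have Mcl: "\<And>m1 m2. m1 \<in> M1 \<Longrightarrow> m2 \<in> M1 \<Longrightarrow> m1 \<otimes>\<^bsub>?G\<^esub> m2 \<in> M1"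
    using G.m_closed carG by simp
  have bmult: "\<And>m1 m2. m1 \<in> M1 \<Longrightarrow> m2 \<in> M1 \<Longrightarrow> b (m1 \<otimes>\<^bsub>?G\<^esub> m2) = compose VD2 (b m1) (b m2)"
  proof -
    fix m1 m2 assume m: "m1 \<in> M1" "m2 \<in> M1"
    have "b (m1 \<otimes>\<^bsub>?G\<^esub> m2) = \<phi> (\<psi> m1) \<otimes>\<^bsub>?B2\<^esub> \<phi> (\<psi> m2)"
      unfolding b_def using \<psi>mult[OF m] hom_mult[OF \<phi>hom \<psi>C[OF m(1)] \<psi>C[OF m(2)]] by simp
    also have "\<dots> = b m1 \<otimes>\<^bsub>BijGroup VD2\<^esub> b m2" unfolding b_def box_product_def by simp
    also have "\<dots> = compose VD2 (b m1) (b m2)" using Bij_mult bB m by blast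
    finally show "b (m1 \<otimes>\<^bsub>?G\<^esub> m2) = compose VD2 (b m1) (b m2)" .
  qed
  have Amult: "\<And>m1 m2 x. m1 \<in> M1 \<Longrightarrow> m2 \<in> M1 \<Longrightarrow> x \<in> V2 \<Longrightarrow> A (m1 \<otimes>\<^bsub>?G\<^esub> m2) x = A m1 (A m2 x)"
  proof -
    fix m1 m2 x assume m: "m1 \<in> M1" "m2 \<in> M1" and x: "x \<in> V2"
    have "A (m1 \<otimes>\<^bsub>?G\<^esub> m2) x = (A m1 \<circ> A m2) x"
    proof (rule L2.U_agree[OF two2 AU1[OF Mcl[OF m]] L2.U_comp[OF M2 N2 AU1[OF m(1)] AU1[OF m(2)]] _ x])
      fix y assume y: "y \<in> VD2"
      have Ay: "A m2 y \<in> VD2" using L2.U_VD[OF AU1[OF m(2)]] y by blast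
      have "A (m1 \<otimes>\<^bsub>?G\<^esub> m2) y = b m1 (b m2 y)"
        using Aval[OF Mcl[OF m] y] bmult[OF m] y by (simp add: compose_def)
      also have "\<dots> = A m1 (A m2 y)" using Aval[OF m(2) y] Aval[OF m(1) Ay] by simp
      finally show "A (m1 \<otimes>\<^bsub>?G\<^esub> m2) y = (A m1 \<circ> A m2) y" by simp
    qed
    then show "A (m1 \<otimes>\<^bsub>?G\<^esub> m2) x = A m1 (A m2 x)" by simp
  qed
  define \<Phi> where "\<Phi> = (\<lambda>m. restrict (A m) V2)"
  have \<Phi>B: "\<And>m. m \<in> M1 \<Longrightarrow> \<Phi> m \<in> Bij V2"
    unfolding \<Phi>_def Bij_def using L2.U_D(1)[OF AU1] by (simp add: bij_betw_restrict_eq)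
  have \<Phi>hom: "\<Phi> \<in> hom ?G (BijGroup V2)"
  proof (rule homI)
    fix m assume "m \<in> carrier ?G" then show "\<Phi> m \<in> carrier (BijGroup V2)" using \<Phi>B carG by simp
  next
    fix m1 m2 assume "m1 \<in> carrier ?G" "m2 \<in> carrier ?G"
    then have m: "m1 \<in> M1" "m2 \<in> M1" using carG by auto
    have "\<Phi> (m1 \<otimes>\<^bsub>?G\<^esub> m2) = compose V2 (\<Phi> m1) (\<Phi> m2)"
    proof (rule ext)
      fix x show "\<Phi> (m1 \<otimes>\<^bsub>?G\<^esub> m2) x = compose V2 (\<Phi> m1) (\<Phi> m2) x"
      proof (cases "x \<in> V2")
        case True
        then show ?thesis unfolding \<Phi>_def using Amult[OF m True] L2.U_in[OF AU1[OF m(2)] True]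
          by (simp add: compose_def)
      qed (simp add: \<Phi>_def compose_def)
    qed
    then show "\<Phi> (m1 \<otimes>\<^bsub>?G\<^esub> m2) = \<Phi> m1 \<otimes>\<^bsub>BijGroup V2\<^esub> \<Phi> m2" using Bij_mult \<Phi>B m by metis
  qed
  have pres: "\<And>m u v. m \<in> carrier ?G \<Longrightarrow> E2 u v \<Longrightarrow> E2 (\<Phi> m u) (\<Phi> m v)"
  proof -
    fix m u v assume "m \<in> carrier ?G" "E2 u v"
    then show "E2 (\<Phi> m u) (\<Phi> m v)" unfolding \<Phi>_def using L2.U_E[OF AU1] L2.E_V carG by auto
  qed
  have noinv: "\<And>m u v. m \<in> carrier ?G \<Longrightarrow> E2 u v \<Longrightarrow> \<not> (\<Phi> m u = v \<and> \<Phi> m v = u)"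
  proof
    fix m u v assume m: "m \<in> carrier ?G" and e: "E2 u v" and sw: "\<Phi> m u = v \<and> \<Phi> m v = u"
    have mM: "m \<in> M1" using m carG by simp
    have uv: "u \<in> V2" "v \<in> V2" using L2.E_V e by auto
    have "A m u = v" using sw uv unfolding \<Phi>_def by simp
    moreover have "A m u \<in> VO2 \<longleftrightarrow> u \<in> VO2" using L2.U_VO_iff[OF AU1[OF mM] uv(1)] .
    moreover have "u \<in> VO2 \<longleftrightarrow> v \<notin> VO2" using L2.bip[OF e] L2.VOD by blast
    ultimately show False by simp
  qed
  obtain w0 where w0: "w0 \<in> V2" "\<forall>m\<in>carrier ?G. \<Phi> m w0 = w0"
    using FA_transfer[OF assms(5) grpG L2.tr \<Phi>hom pres noinv] by blast
  define F where "F = {x \<in> V2. \<forall>m\<in>M1. A m x = x}"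
  have w0F: "w0 \<in> F" using w0 carG unfolding F_def \<Phi>_def by auto
  show False
  proof (cases "F = V2")
    case True
    obtain m0 where m0: "m0 \<in> M1" "\<psi> m0 \<noteq> \<psi> (\<lambda>a\<in>\<Omega>1. a)"
      using F1.psi_nontriv[OF M1nt N1] unfolding \<psi>_def by blast
    have one1: "(\<lambda>a\<in>\<Omega>1. a) \<in> M1" using G.one_closed oneG carG by simp
    have "b m0 = b (\<lambda>a\<in>\<Omega>1. a)"
    proof -
      have "restrict (A m0) VD2 = restrict (A (\<lambda>a\<in>\<Omega>1. a)) VD2"
      proof (rule restrict_ext)
        fix x assume x: "x \<in> VD2"
        then have "x \<in> F" using True L2.VD_V by blast
        then show "A m0 x = A (\<lambda>a\<in>\<Omega>1. a) x" using m0(1) one1 unfolding F_def by simp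
      qed
      then show ?thesis using AU[OF m0(1)] AU[OF one1] by simp
    qed
    then have "\<psi> m0 = \<psi> (\<lambda>a\<in>\<Omega>1. a)"
      using inj_onD[OF bij_betw_imp_inj_on[OF \<phi>bij] _ \<psi>C[OF m0(1)] \<psi>C[OF one1]] unfolding b_def by blast
    then show False using m0(2) by simp
  next
    case False
    then obtain y where y: "y \<in> V2" "y \<notin> F" unfolding F_def by blast
    have "walk E2 (L2.path w0 y)" "hd (L2.path w0 y) \<in> F" "last (L2.path w0 y) \<notin> F"
      using L2.path_walk[OF w0(1) y(1)] L2.path_hd[OF w0(1) y(1)] L2.path_last[OF w0(1) y(1)] w0F y by auto
    then obtain u w where uw: "u \<in> F" "w \<notin> F" "E2 u w" using walk_exit by metis
    have uV: "u \<in> V2" and wV: "w \<in> V2" using L2.E_V[OF uw(3)] by auto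
    have Au: "\<And>m. m \<in> M1 \<Longrightarrow> A m u = u" using uw(1) unfolding F_def by blast
    obtain m1 where m1: "m1 \<in> M1" "A m1 w \<noteq> w" using uw(2) wV unfolding F_def by blast
    define T where "T = L2.S u"
    define L where "L = (if u \<in> VO2 then M2 else N2)"
    have TL: "perm_group T L" unfolding T_def L_def L2.S_def using M2 N2 by simp
    have LB: "L \<subseteq> Bij T" using TL unfolding perm_group_def using subgroup.subset by fastforce
    define lam where "lam = (\<lambda>m. local_action T E2 c2 (A m) u)"
    have lamL: "\<And>m. m \<in> M1 \<Longrightarrow> lam m \<in> L"
      unfolding lam_def T_def L_def using L2.la_mem[OF AU1 uV] by simp
    have lamhom: "lam \<in> hom ?G (pgrp T L)"
    proof (rule homI)
      fix m assume "m \<in> carrier ?G" then show "lam m \<in> carrier (pgrp T L)" using lamL carG unfolding pgrp_def by simp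
    next
      fix m1 m2 assume "m1 \<in> carrier ?G" "m2 \<in> carrier ?G"
      then have m: "m1 \<in> M1" "m2 \<in> M1" using carG by auto
      have "lam (m1 \<otimes>\<^bsub>?G\<^esub> m2) = local_action T E2 c2 (A m1 \<circ> A m2) u"
        unfolding lam_def T_def by (rule L2.la_cong[OF uV]) (use Amult[OF m] in simp)
      also have "\<dots> = compose T (local_action T E2 c2 (A m1) (A m2 u)) (lam m2)"
        unfolding lam_def T_def by (rule L2.la_comp[OF AU1[OF m(1)] AU1[OF m(2)] uV])
      also have "\<dots> = compose T (lam m1) (lam m2)" unfolding lam_def using Au[OF m(2)] by simp
      also have "\<dots> = lam m1 \<otimes>\<^bsub>BijGroup T\<^esub> lam m2" using Bij_mult lamL LB m by (metis subsetD)
      finally show "lam (m1 \<otimes>\<^bsub>?G\<^esub> m2) = lam m1 \<otimes>\<^bsub>pgrp T L\<^esub> lam m2" unfolding pgrp_def by simp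
    qed
    have nt: "\<exists>m\<in>carrier ?G. lam m \<noteq> (\<lambda>a\<in>T. a)"
    proof -
      let ?a = "c2 (u, w)"
      have aT: "?a \<in> T" unfolding T_def using L2.c_out[OF uw(3)] .
      have "lam m1 ?a = c2 (A m1 u, A m1 (L2.nb u ?a))"
        unfolding lam_def using L2.local_action_eq[OF aT] .
      also have "\<dots> = c2 (u, A m1 w)" using L2.nb_eq[OF uw(3)] Au[OF m1(1)] by simp
      finally have la: "lam m1 ?a = c2 (u, A m1 w)" .
      have "E2 u (A m1 w)" using L2.U_E[OF AU1[OF m1(1)] uw(3)] Au[OF m1(1)] by simp
      then have "c2 (u, A m1 w) \<noteq> ?a" using L2.c_inj[OF _ uw(3)] m1(2) by blast
      then have "lam m1 ?a \<noteq> (\<lambda>a\<in>T. a) ?a" using la aT by simp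
      then show ?thesis using m1(1) carG by force
    qed
    obtain K H where KH: "K \<lhd> ?G" "K \<noteq> carrier ?G" "subgroup H (pgrp T L)" "?G Mod K \<cong> pgrp T H"
      using final_step[OF grpG TL lamhom nt] by blast
    show False
    proof (cases "u \<in> VO2")
      case True
      then have "T = \<Omega>2" "L = M2" unfolding T_def L_def L2.S_def by auto
      then show False using assms(6)[of K H] KH carG by simp
    next
      case False
      then have "T = \<Delta>2" "L = N2" unfolding T_def L_def L2.S_def by auto
      then show False using assms(7)[of K H] KH carG by simp
    qed
  qed
qed


end
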